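(* For each $n\ge1$ let $X_n$ be a stationary and isotropic Poisson hyperplane process in $\mathbb{R}^n$ with intensity $\gamma_n$, let $Z_{0,n}$ be the zero cell of the induced tessellation, and for fixed $\delta>0$ let $Y_{n,\delta}$ be a uniformly distributed random point on the sphere of radius $\delta$ centered at the origin in $\mathbb{R}^n$, independent of $X_n$. Assume $\gamma_n\sim\rho n^\alpha$ as $n\to\infty$ for some $\rho>0$ and $\alpha\in\mathbb{R}$. Then $$\lim_{n\to\infty}\mathbb{P}(Y_{n,\delta}\in Z_{0,n})=\begin{cases}0,&\alpha>\tfrac12,\\ e^{-\sqrt{2/\pi}\,\rho\delta},&\alpha=\tfrac12,\\ 1,&\alpha<\tfrac12.\end{cases}$$
   Context: A stationary and isotropic Poisson hyperplane process of intensity $\gamma$ in $\mathbb{R}^n$ is the Poisson process on the space of affine hyperplanes $H(u,\tau)=\{x:\langle x,u\rangle=\tau\}$ with intensity measure $\Theta(A)=2\gamma\int_{S^{n-1}}\int_0^\infty 1\{H(u,\tau)\in A\}\,d\tau\,\sigma(du)$, $\sigma$ the normalized spherical Lebesgue measure. The zero cell $Z_{0,n}$ is the (closed) cell of the induced tessellation containing the origin. *)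

theory Defs
  imports "HOL-Probability.Probability" "HOL-Library.Landau_Symbols"
begin

text \<open>Euclidean n-space, with n varying, is represented by extensional functions
  on the index set {..<n}, carrying the product Lebesgue measure.\<close>

definition lebesgue_n :: "nat \<Rightarrow> (nat \<Rightarrow> real) measure" where
  "lebesgue_n n = PiM {..<n} (\<lambda>_. lborel)"

definition inner_n :: "nat \<Rightarrow> (nat \<Rightarrow> real) \<Rightarrow> (nat \<Rightarrow> real) \<Rightarrow> real" where
  "inner_n n x y = (\<Sum>i<n. x i * y i)"

definition norm_n :: "nat \<Rightarrow> (nat \<Rightarrow> real) \<Rightarrow> real" where
  "norm_n n x = sqrt (\<Sum>i<n. (x i)\<^sup>2)"

text \<open>Normalized spherical Lebesgue measure on the unit sphere of R^n (cone-measure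
  construction: radial projection of the uniform distribution on the punctured unit ball).\<close>

definition sph_measure :: "nat \<Rightarrow> (nat \<Rightarrow> real) measure" where
  "sph_measure n =
     distr (uniform_measure (lebesgue_n n)
              {x \<in> space (lebesgue_n n). 0 < norm_n n x \<and> norm_n n x \<le> 1})
           (lebesgue_n n) (\<lambda>x. restrict (\<lambda>i. x i / norm_n n x) {..<n})"

definition unif_sphere :: "nat \<Rightarrow> real \<Rightarrow> (nat \<Rightarrow> real) measure" where
  "unif_sphere n \<delta> = distr (sph_measure n) (lebesgue_n n) (\<lambda>u. restrict (\<lambda>i. \<delta> * u i) {..<n})"

text \<open>Hyperplanes H(u,tau) = {x. <x,u> = tau} are parametrised by pairs (u,tau).
  Intensity measure Theta(A) = 2 gamma int_S int_0^infty 1{(u,tau) in A} dtau sigma(du).\<close>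

definition hyp_intensity :: "nat \<Rightarrow> real \<Rightarrow> ((nat \<Rightarrow> real) \<times> real) measure" where
  "hyp_intensity n \<gamma> =
     density (sph_measure n \<Otimes>\<^sub>M lborel)
             (\<lambda>p. ennreal (2 * \<gamma>) * indicator {0..} (snd p))"

text \<open>A Poisson point process with intensity measure Theta, realised as a random
  (simple) set of points X on the probability space M.\<close>

definition poisson_process :: "'w measure \<Rightarrow> ('w \<Rightarrow> 'p set) \<Rightarrow> 'p measure \<Rightarrow> bool" where
  "poisson_process M X \<Theta> \<longleftrightarrow>
     prob_space M \<and>
     (\<forall>\<omega>\<in>space M. X \<omega> \<subseteq> space \<Theta>) \<and>
     (\<forall>A\<in>sets \<Theta>. emeasure \<Theta> A < \<infinity> \<longrightarrow>
        (\<forall>k::nat. {\<omega>\<in>space M. finite (X \<omega> \<inter> A) \<and> card (X \<omega> \<inter> A) = k} \<in> sets M \<and>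
           measure M {\<omega>\<in>space M. finite (X \<omega> \<inter> A) \<and> card (X \<omega> \<inter> A) = k}
             = exp (- measure \<Theta> A) * (measure \<Theta> A) ^ k / fact k)) \<and>
     (\<forall>(I::nat set) A. finite I \<longrightarrow> (\<forall>i\<in>I. A i \<in> sets \<Theta> \<and> emeasure \<Theta> (A i) < \<infinity>) \<longrightarrow>
        disjoint_family_on A I \<longrightarrow>
        prob_space.indep_vars M (\<lambda>_. count_space UNIV) (\<lambda>i \<omega>. card (X \<omega> \<inter> A i)) I)"

definition process_events :: "'w measure \<Rightarrow> ('w \<Rightarrow> 'p set) \<Rightarrow> 'p measure \<Rightarrow> 'w set set" where
  "process_events M X \<Theta> =
     {{\<omega>\<in>space M. finite (X \<omega> \<inter> A) \<and> card (X \<omega> \<inter> A) = k} | A k. A \<in> sets \<Theta>}"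

definition indep_of_process ::
  "'w measure \<Rightarrow> ('w \<Rightarrow> 'p set) \<Rightarrow> 'p measure \<Rightarrow> ('w \<Rightarrow> 'b) \<Rightarrow> 'b measure \<Rightarrow> bool" where
  "indep_of_process M X \<Theta> Y N \<longleftrightarrow>
     prob_space.indep_set M
       (sigma_sets (space M) {Y -` B \<inter> space M | B. B \<in> sets N})
       (sigma_sets (space M) (process_events M X \<Theta>))"

definition zero_cell :: "nat \<Rightarrow> ((nat \<Rightarrow> real) \<times> real) set \<Rightarrow> (nat \<Rightarrow> real) set" where
  "zero_cell n S = {x \<in> space (lebesgue_n n). \<forall>(u,\<tau>)\<in>S. inner_n n x u \<le> \<tau>}"

end

theory Submission
  imports Defs
begin

lemma psf_lborel: "product_sigma_finite (\<lambda>_::'i. (lborel::real measure))"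
  by (simp add: product_sigma_finite_def lborel.sigma_finite_measure_axioms)

lemma measurable_scale_PiM[measurable]:
  "(\<lambda>x. restrict (\<lambda>i. (c::real) * x i) I) \<in> measurable (PiM I (\<lambda>_. lborel)) (PiM I (\<lambda>_. lborel))"
  by (rule measurable_restrict) measurable

lemma measurable_inner_update:
  assumes f[measurable]: "f \<in> borel_measurable (PiM (insert j I) (\<lambda>_. (lborel::real measure)))"
  shows "(\<lambda>x. \<integral>\<^sup>+y. f (x(j:=y)) \<partial>lborel) \<in> borel_measurable (PiM I (\<lambda>_. lborel))"
proof -
  have "(\<lambda>(x,y). f (x(j:=y))) \<in> borel_measurable (PiM I (\<lambda>_. lborel) \<Otimes>\<^sub>M lborel)"
    using measurable_comp[OF measurable_add_dim[of j I "\<lambda>_. lborel"] f]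
    by (simp add: o_def case_prod_beta')
  then show ?thesis
    using lborel.borel_measurable_nn_integral[of "\<lambda>x y. f (x(j:=y))"] by simp
qed

lemma PiM_scale:
  fixes I :: "'i set"
  assumes "finite I" "c > 0"
  shows "f \<in> borel_measurable (PiM I (\<lambda>_. lborel)) \<Longrightarrow>
    ennreal (c ^ card I) * (\<integral>\<^sup>+x. f (restrict (\<lambda>i. c * x i) I) \<partial>PiM I (\<lambda>_. lborel))
      = (\<integral>\<^sup>+x. f x \<partial>PiM I (\<lambda>_. lborel))"
  using assms(1)
proof (induction I arbitrary: f rule: finite_induct)
  case empty
  show ?case
    by (simp add: PiM_empty nn_integral_count_space_finite)
next
  case (insert j I)
  interpret product_sigma_finite "\<lambda>_::'i. (lborel::real measure)" by (rule psf_lborel)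
  note fm[measurable] = insert.prems
  define F where "F = (\<lambda>x. \<integral>\<^sup>+y. f (x(j:=y)) \<partial>lborel)"
  have Fm[measurable]: "F \<in> borel_measurable (PiM I (\<lambda>_. lborel))"
    unfolding F_def by (rule measurable_inner_update[OF fm])
  have m2: "(\<lambda>x. f (restrict (\<lambda>i. c * x i) (insert j I))) \<in> borel_measurable (PiM (insert j I) (\<lambda>_. lborel))"
    by measurable
  have "(\<integral>\<^sup>+x. f (restrict (\<lambda>i. c * x i) (insert j I)) \<partial>PiM (insert j I) (\<lambda>_. lborel))
     = (\<integral>\<^sup>+x. \<integral>\<^sup>+y. f ((restrict (\<lambda>i. c * x i) I)(j := c * y)) \<partial>lborel \<partial>PiM I (\<lambda>_. lborel))"
    apply (subst product_nn_integral_insert[OF insert(1,2) m2])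
    apply (intro nn_integral_cong arg_cong[where f=f])
    using insert(2) by (auto simp: space_PiM PiE_def extensional_def restrict_def fun_eq_iff)
  also have "\<dots> = (\<integral>\<^sup>+x. ennreal (1/c) * F (restrict (\<lambda>i. c * x i) I) \<partial>PiM I (\<lambda>_. lborel))"
  proof (intro nn_integral_cong)
    fix x :: "'i \<Rightarrow> real" assume x: "x \<in> space (PiM I (\<lambda>_. lborel))"
    have xm: "restrict (\<lambda>i. c * x i) I \<in> space (PiM I (\<lambda>_. lborel))"
      by (simp add: space_PiM)
    have gm: "(\<lambda>y. f ((restrict (\<lambda>i. c * x i) I)(j := y))) \<in> borel_measurable lborel"
      using measurable_comp[OF measurable_component_update[OF xm insert(2)] fm] by (simp add: o_def)
    have "F (restrict (\<lambda>i. c * x i) I) = ennreal \<bar>c\<bar> * (\<integral>\<^sup>+y. f ((restrict (\<lambda>i. c * x i) I)(j := 0 + c * y)) \<partial>lborel)"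
      unfolding F_def using gm assms(2) by (intro nn_integral_real_affine) auto
    moreover have "ennreal (1/c) * ennreal \<bar>c\<bar> = 1"
      using assms(2) by (simp add: ennreal_mult'[symmetric])
    ultimately show "(\<integral>\<^sup>+y. f ((restrict (\<lambda>i. c * x i) I)(j := c * y)) \<partial>lborel) = ennreal (1/c) * F (restrict (\<lambda>i. c * x i) I)"
      by (simp add: mult.assoc[symmetric])
  qed
  also have "\<dots> = ennreal (1/c) * (\<integral>\<^sup>+x. F (restrict (\<lambda>i. c * x i) I) \<partial>PiM I (\<lambda>_. lborel))"
    by (rule nn_integral_cmult) measurable
  finally have eq: "(\<integral>\<^sup>+x. f (restrict (\<lambda>i. c * x i) (insert j I)) \<partial>PiM (insert j I) (\<lambda>_. lborel)) =
      ennreal (1/c) * (\<integral>\<^sup>+x. F (restrict (\<lambda>i. c * x i) I) \<partial>PiM I (\<lambda>_. lborel))" .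
  have "ennreal (c ^ card (insert j I)) * ennreal (1/c) = ennreal (c ^ card I)"
    using insert assms(2) by (simp add: ennreal_mult'[symmetric])
  then have "ennreal (c ^ card (insert j I)) * (\<integral>\<^sup>+x. f (restrict (\<lambda>i. c * x i) (insert j I)) \<partial>PiM (insert j I) (\<lambda>_. lborel))
      = ennreal (c ^ card I) * (\<integral>\<^sup>+x. F (restrict (\<lambda>i. c * x i) I) \<partial>PiM I (\<lambda>_. lborel))"
    unfolding eq by (simp add: mult.assoc[symmetric])
  also have "\<dots> = (\<integral>\<^sup>+x. F x \<partial>PiM I (\<lambda>_. lborel))"
    by (rule insert.IH[OF Fm])
  also have "\<dots> = (\<integral>\<^sup>+x. f x \<partial>PiM (insert j I) (\<lambda>_. lborel))"
    unfolding F_def by (rule product_nn_integral_insert[symmetric, OF insert(1,2) fm])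
  finally show ?case .
qed

abbreviation LL :: "nat \<Rightarrow> (nat \<Rightarrow> real) measure" where
  "LL n \<equiv> PiM {..<n} (\<lambda>_. lborel)"

lemma lebesgue_n_LL: "lebesgue_n n = LL n"
  by (simp add: lebesgue_n_def)

lemma norm_n_meas[measurable]: "norm_n n \<in> borel_measurable (LL n)"
  unfolding norm_n_def by measurable

lemma inner_n_meas1[measurable]: "(\<lambda>x. inner_n n z x) \<in> borel_measurable (LL n)"
  unfolding inner_n_def by measurable

lemma inner_n_meas2[measurable]: "(\<lambda>x. inner_n n x z) \<in> borel_measurable (LL n)"
  unfolding inner_n_def by measurable

lemma norm_n_nonneg: "0 \<le> norm_n n x"
  by (simp add: norm_n_def sum_nonneg)

lemma norm_n_scale: "0 \<le> c \<Longrightarrow> norm_n n (restrict (\<lambda>i. c * x i) {..<n}) = c * norm_n n x"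
proof -
  assume c: "0 \<le> c"
  have "(\<Sum>i<n. (restrict (\<lambda>i. c * x i) {..<n} i)\<^sup>2) = c\<^sup>2 * (\<Sum>i<n. (x i)\<^sup>2)"
    by (simp add: sum_distrib_left power_mult_distrib)
  then show ?thesis
    using c unfolding norm_n_def by (simp only: real_sqrt_mult real_sqrt_abs abs_of_nonneg)
qed

lemma abs_le_norm_n: "i < n \<Longrightarrow> \<bar>x i\<bar> \<le> norm_n n x"
proof -
  assume i: "i < n"
  have "(x i)\<^sup>2 \<le> (\<Sum>j<n. (x j)\<^sup>2)"
    using i by (intro member_le_sum) auto
  then have "sqrt ((x i)\<^sup>2) \<le> norm_n n x"
    unfolding norm_n_def by (rule real_sqrt_le_mono)
  then show ?thesis by simp
qed

lemma norm_n_zero_iff: "x \<in> space (LL n) \<Longrightarrow> norm_n n x = 0 \<longleftrightarrow> x = (\<lambda>i\<in>{..<n}. 0)"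
proof -
  assume x: "x \<in> space (LL n)"
  have "norm_n n x = 0 \<longleftrightarrow> (\<forall>i\<in>{..<n}. (x i)\<^sup>2 = 0)"
    unfolding norm_n_def real_sqrt_eq_zero_cancel_iff by (subst sum_nonneg_eq_0_iff) auto
  also have "\<dots> \<longleftrightarrow> x = (\<lambda>i\<in>{..<n}. 0)"
    using x by (auto simp: space_PiM PiE_def extensional_def fun_eq_iff)
  finally show ?thesis .
qed

lemma ball_finite: "emeasure (LL n) {x\<in>space (LL n). norm_n n x \<le> 1} \<le> 2 ^ n"
proof -
  interpret product_sigma_finite "\<lambda>_::nat. (lborel::real measure)" by (rule psf_lborel)
  have "{x\<in>space (LL n). norm_n n x \<le> 1} \<subseteq> PiE {..<n} (\<lambda>_. {-1..1})"
  proof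
    fix x assume x: "x \<in> {x\<in>space (LL n). norm_n n x \<le> 1}"
    have "\<bar>x i\<bar> \<le> 1" if "i < n" for i
      using abs_le_norm_n[OF that, of x] x by simp
    then show "x \<in> PiE {..<n} (\<lambda>_. {-1..1})"
      using x by (simp add: space_PiM PiE_iff abs_le_iff)
  qed
  then have "emeasure (LL n) {x\<in>space (LL n). norm_n n x \<le> 1} \<le> emeasure (LL n) (PiE {..<n} (\<lambda>_. {-1..1}))"
    by (intro emeasure_mono) auto
  also have "\<dots> = (\<Prod>i<n. emeasure lborel {-1..1::real})"
    by (subst emeasure_PiM) auto
  also have "\<dots> = 2 ^ n" by simp
  finally show ?thesis .
qed

lemma singleton_null: "n \<ge> 1 \<Longrightarrow> emeasure (LL n) {x\<in>space (LL n). norm_n n x = 0} = 0"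
proof -
  assume n: "n \<ge> 1"
  interpret product_sigma_finite "\<lambda>_::nat. (lborel::real measure)" by (rule psf_lborel)
  have "{x\<in>space (LL n). norm_n n x = 0} = PiE {..<n} (\<lambda>_. {0})"
  proof (intro set_eqI iffI)
    fix x assume "x \<in> {x\<in>space (LL n). norm_n n x = 0}"
    then have "x = (\<lambda>i\<in>{..<n}. 0)" using norm_n_zero_iff by blast
    then show "x \<in> PiE {..<n} (\<lambda>_. {0})" by simp
  next
    fix x assume x: "x \<in> PiE {..<n} (\<lambda>_. {0::real})"
    then have "x = (\<lambda>i\<in>{..<n}. 0)" by (auto simp: PiE_iff extensional_def fun_eq_iff)
    moreover have "x \<in> space (LL n)" using x by (auto simp: space_PiM PiE_iff)
    ultimately show "x \<in> {x\<in>space (LL n). norm_n n x = 0}" using norm_n_zero_iff by blast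
  qed
  also have "emeasure (LL n) \<dots> = (\<Prod>i<n. emeasure lborel {0::real})"
    by (subst emeasure_PiM) auto
  also have "\<dots> = 0" using n by simp
  finally show ?thesis .
qed

lemma ftc_pow:
  assumes n: "n \<ge> 1" and ab: "0 \<le> a" "a \<le> b"
  shows "(\<integral>\<^sup>+s. ennreal (real n * s^(n-1)) * indicator {a<..b} s \<partial>lborel) = ennreal (b^n - a^n)"
proof -
  have "(\<integral>\<^sup>+s. ennreal (real n * s^(n-1)) * indicator {a<..b} s \<partial>lborel)
      = (\<integral>\<^sup>+s. ennreal (real n * s^(n-1)) * indicator {a..b} s \<partial>lborel)"
    by (intro nn_integral_cong_AE, rule AE_mp[OF AE_lborel_singleton[of a]])
       (auto simp: indicator_def)
  also have "\<dots> = ennreal (b^n - a^n)"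
  proof (rule nn_integral_has_integral_lebesgue')
    show "\<And>x. x \<in> {a..b} \<Longrightarrow> 0 \<le> real n * x ^ (n - 1)" using ab by auto
    have "((\<lambda>s. real n * s^(n-1)) has_integral ((\<lambda>s. s^n) b - (\<lambda>s. s^n) a)) {a..b}"
    proof (rule fundamental_theorem_of_calculus[OF ab(2)])
      fix x :: real assume "x \<in> {a..b}"
      have "((\<lambda>s. s^n) has_real_derivative real n * x^(n-1)) (at x within {a..b})"
        by (auto intro!: derivative_eq_intros)
      then show "((\<lambda>s. s^n) has_vector_derivative real n * x^(n-1)) (at x within {a..b})"
        by (simp add: has_real_derivative_iff_has_vector_derivative)
    qed
    then show "((\<lambda>s. real n * s^(n-1)) has_integral (b^n - a^n)) {a..b}" by simp
  qed
  finally show ?thesis .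
qed

lemma Q_scale:
  fixes \<psi> :: "(nat \<Rightarrow> real) \<Rightarrow> ennreal"
  assumes n: "n \<ge> 1"
    and \<psi>m[measurable]: "\<psi> \<in> borel_measurable (LL n)"
    and hom: "\<And>x c. x \<in> space (LL n) \<Longrightarrow> c > 0 \<Longrightarrow> \<psi> (restrict (\<lambda>i. c * x i) {..<n}) = \<psi> x"
    and t: "t \<ge> 0"
  shows "(\<integral>\<^sup>+x. \<psi> x * indicator {0<..t} (norm_n n x) \<partial>LL n) =
         ennreal (t^n) * (\<integral>\<^sup>+x. \<psi> x * indicator {0<..1} (norm_n n x) \<partial>LL n)"
proof (cases "t = 0")
  case True then show ?thesis using n by simp
next
  case False
  then have t: "t > 0" using t by simp
  have "ennreal (t ^ card {..<n}) * (\<integral>\<^sup>+x. (\<lambda>x. \<psi> x * indicator {0<..t} (norm_n n x)) (restrict (\<lambda>i. t * x i) {..<n}) \<partial>LL n)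
      = (\<integral>\<^sup>+x. \<psi> x * indicator {0<..t} (norm_n n x) \<partial>LL n)"
    by (rule PiM_scale) (use t in auto)
  moreover have "(\<integral>\<^sup>+x. (\<lambda>x. \<psi> x * indicator {0<..t} (norm_n n x)) (restrict (\<lambda>i. t * x i) {..<n}) \<partial>LL n)
      = (\<integral>\<^sup>+x. \<psi> x * indicator {0<..1} (norm_n n x) \<partial>LL n)"
  proof (intro nn_integral_cong)
    fix x assume x: "x \<in> space (LL n)"
    have "indicator {0<..t} (t * norm_n n x) = (indicator {0<..1} (norm_n n x) :: ennreal)"
      using t by (auto simp: indicator_def zero_less_mult_iff mult_le_cancel_left1)
    then show "\<psi> (restrict (\<lambda>i. t * x i) {..<n}) * indicator {0<..t} (norm_n n (restrict (\<lambda>i. t * x i) {..<n}))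
        = \<psi> x * indicator {0<..1} (norm_n n x)"
      using hom[OF x t] norm_n_scale[of t n x] t by simp
  qed
  ultimately show ?thesis by simp
qed

lemma polar:
  fixes \<psi> :: "(nat \<Rightarrow> real) \<Rightarrow> ennreal" and w :: "real \<Rightarrow> ennreal"
  assumes n: "n \<ge> 1"
    and \<psi>m[measurable]: "\<psi> \<in> borel_measurable (LL n)"
    and hom: "\<And>x c. x \<in> space (LL n) \<Longrightarrow> c > 0 \<Longrightarrow> \<psi> (restrict (\<lambda>i. c * x i) {..<n}) = \<psi> x"
    and bnd: "\<And>x. \<psi> x \<le> ennreal B"
    and wm[measurable]: "w \<in> borel_measurable borel"
  shows "(\<integral>\<^sup>+x. \<psi> x * w (norm_n n x) * indicator {0<..} (norm_n n x) \<partial>LL n) =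
    (\<integral>\<^sup>+x. \<psi> x * indicator {0<..1} (norm_n n x) \<partial>LL n) *
    (\<integral>\<^sup>+s. w s * ennreal (real n * s^(n-1)) * indicator {0<..} s \<partial>lborel)"
proof -
  define G where "G = (\<integral>\<^sup>+x. \<psi> x * indicator {0<..1} (norm_n n x) \<partial>LL n)"
  have "G \<le> (\<integral>\<^sup>+x. ennreal (max B 0) * indicator {x\<in>space (LL n). norm_n n x \<le> 1} x \<partial>LL n)"
    unfolding G_def
  proof (intro nn_integral_mono)
    fix x assume "x \<in> space (LL n)"
    moreover have "\<psi> x \<le> ennreal (max B 0)"
      using bnd[of x] by (meson ennreal_leI max.cobounded1 order_trans)
    ultimately show "\<psi> x * indicator {0<..1} (norm_n n x) \<le> ennreal (max B 0) * indicator {x\<in>space (LL n). norm_n n x \<le> 1} x"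
      by (auto simp: indicator_def)
  qed
  also have "\<dots> = ennreal (max B 0) * emeasure (LL n) {x\<in>space (LL n). norm_n n x \<le> 1}"
    by (rule nn_integral_cmult_indicator) measurable
  also have "\<dots> \<le> ennreal (max B 0) * 2^n"
    by (intro mult_left_mono ball_finite) auto
  also have "\<dots> < \<infinity>"
    by (simp add: ennreal_mult_less_top power_less_top_ennreal)
  finally have Gfin: "G < \<infinity>" .
  then obtain g where g: "G = ennreal g" "g \<ge> 0"
    by (cases G) auto
  have Q: "(\<integral>\<^sup>+x. \<psi> x * indicator {0<..t} (norm_n n x) \<partial>LL n) = ennreal (t^n * g)" if "t \<ge> 0" for t
    using Q_scale[OF n \<psi>m hom that] that g unfolding G_def[symmetric]
    by (simp add: ennreal_mult')
  define D where "D = density (LL n) (\<lambda>x. \<psi> x * indicator {0<..} (norm_n n x))"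
  define \<nu> where "\<nu> = distr D borel (norm_n n)"
  define \<mu> where "\<mu> = density lborel (\<lambda>s. G * ennreal (real n * s^(n-1)) * indicator {0<..} s)"
  have setsD: "sets D = sets (LL n)" unfolding D_def by simp
  have nmD[measurable]: "norm_n n \<in> borel_measurable D"
    using measurable_cong_sets[OF setsD refl] norm_n_meas by blast
  have nu_Ioc: "emeasure \<nu> {a<..b} = ennreal (g * ((max b 0)^n - (max a 0)^n))" if ab: "a \<le> b" for a b
  proof -
    define a' where "a' = max a 0"
    define b' where "b' = max b 0"
    have a'b': "0 \<le> a'" "a' \<le> b'" using ab by (auto simp: a'_def b'_def)
    have "emeasure \<nu> {a<..b} = emeasure D (norm_n n -` {a<..b} \<inter> space D)"
      unfolding \<nu>_def by (rule emeasure_distr) auto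
    also have "\<dots> = (\<integral>\<^sup>+x. \<psi> x * indicator {0<..} (norm_n n x) * indicator (norm_n n -` {a<..b} \<inter> space D) x \<partial>LL n)"
      unfolding D_def by (rule emeasure_density) (auto simp: setsD[unfolded D_def])
    also have "\<dots> = (\<integral>\<^sup>+x. \<psi> x * indicator {a'<..b'} (norm_n n x) \<partial>LL n)"
      by (intro nn_integral_cong) (auto simp: indicator_def a'_def b'_def D_def)
    finally have e1: "emeasure \<nu> {a<..b} = (\<integral>\<^sup>+x. \<psi> x * indicator {a'<..b'} (norm_n n x) \<partial>LL n)" .
    have "(\<integral>\<^sup>+x. \<psi> x * indicator {a'<..b'} (norm_n n x) \<partial>LL n) + (\<integral>\<^sup>+x. \<psi> x * indicator {0<..a'} (norm_n n x) \<partial>LL n)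
        = (\<integral>\<^sup>+x. \<psi> x * indicator {a'<..b'} (norm_n n x) + \<psi> x * indicator {0<..a'} (norm_n n x) \<partial>LL n)"
      by (rule nn_integral_add[symmetric]) auto
    also have "\<dots> = (\<integral>\<^sup>+x. \<psi> x * indicator {0<..b'} (norm_n n x) \<partial>LL n)"
      using a'b' by (intro nn_integral_cong) (auto simp: indicator_def)
    finally have "(\<integral>\<^sup>+x. \<psi> x * indicator {a'<..b'} (norm_n n x) \<partial>LL n) + ennreal (a'^n * g) = ennreal (b'^n * g)"
      using Q a'b' by simp
    moreover have "a'^n * g \<le> b'^n * g"
      using a'b' g by (intro mult_right_mono power_mono) auto
    ultimately have "(\<integral>\<^sup>+x. \<psi> x * indicator {a'<..b'} (norm_n n x) \<partial>LL n) = ennreal (b'^n * g - a'^n * g)"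
      using a'b' g
      by (metis ennreal_add_diff_cancel_right ennreal_minus ennreal_neq_top zero_le_mult_iff zero_le_power)
    then show ?thesis
      using e1 by (simp add: a'_def[symmetric] b'_def[symmetric] algebra_simps)
  qed
  have mu_Ioc: "emeasure \<mu> {a<..b} = ennreal (g * ((max b 0)^n - (max a 0)^n))" if ab: "a \<le> b" for a b
  proof -
    define a' where "a' = max a 0"
    define b' where "b' = max b 0"
    have a'b': "0 \<le> a'" "a' \<le> b'" using ab by (auto simp: a'_def b'_def)
    have "emeasure \<mu> {a<..b} = (\<integral>\<^sup>+s. G * ennreal (real n * s^(n-1)) * indicator {0<..} s * indicator {a<..b} s \<partial>lborel)"
      unfolding \<mu>_def by (rule emeasure_density) auto
    also have "\<dots> = (\<integral>\<^sup>+s. G * (ennreal (real n * s^(n-1)) * indicator {a'<..b'} s) \<partial>lborel)"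
      by (intro nn_integral_cong) (auto simp: indicator_def a'_def b'_def)
    also have "\<dots> = G * (\<integral>\<^sup>+s. ennreal (real n * s^(n-1)) * indicator {a'<..b'} s \<partial>lborel)"
      by (rule nn_integral_cmult) auto
    also have "\<dots> = G * ennreal (b'^n - a'^n)"
      using ftc_pow[OF n a'b'] by simp
    finally show ?thesis
      using g a'b' by (simp add: a'_def[symmetric] b'_def[symmetric] ennreal_mult')
  qed
  have E_eq: "emeasure \<nu> X = emeasure \<mu> X" if "X \<in> range (\<lambda>(a, b). {a<..b::real})" for X
  proof -
    obtain a b where X: "X = {a<..b}" using \<open>X \<in> _\<close> by auto
    show ?thesis
    proof (cases "a \<le> b")
      case True then show ?thesis using nu_Ioc mu_Ioc X by simp
    next
      case False then show ?thesis using X by simp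
    qed
  qed
  have sigma_eq: "sets borel = sigma_sets (UNIV::real set) (range (\<lambda>(a, b). {a<..b::real}))"
    by (subst borel_sigma_sets_Ioc) (simp add: sets_measure_of)
  have "\<nu> = \<mu>"
  proof (rule measure_eqI_generator_eq_countable[where E="range (\<lambda>(a, b). {a<..b::real})" and \<Omega>=UNIV
        and A="range (\<lambda>i::nat. {- real i<..real i})"])
    show "Int_stable (range (\<lambda>(a, b). {a<..b::real}))"
    proof (rule Int_stableI)
      fix X Y assume "X \<in> range (\<lambda>(a, b). {a<..b::real})" "Y \<in> range (\<lambda>(a, b). {a<..b::real})"
      then obtain a b c d where "X = {a<..b}" "Y = {c<..d}" by auto
      then have "X \<inter> Y = {max a c<..min b d}" by auto
      then show "X \<inter> Y \<in> range (\<lambda>(a, b). {a<..b::real})" by auto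
    qed
    show "sets \<nu> = sigma_sets UNIV (range (\<lambda>(a, b). {a<..b}))"
      unfolding \<nu>_def using sigma_eq by simp
    show "sets \<mu> = sigma_sets UNIV (range (\<lambda>(a, b). {a<..b}))"
      unfolding \<mu>_def using sigma_eq by simp
    show "range (\<lambda>i::nat. {- real i<..real i}) \<subseteq> range (\<lambda>(a, b). {a<..b})" by auto
    show "\<Union> (range (\<lambda>i::nat. {- real i<..real i})) = UNIV"
    proof (intro set_eqI iffI)
      fix x :: real
      obtain i :: nat where "\<bar>x\<bar> < real i" using reals_Archimedean2 by blast
      then have "x \<in> {- real i<..real i}" by auto
      then show "x \<in> \<Union> (range (\<lambda>i::nat. {- real i<..real i}))" by blast
    qed auto
    show "emeasure \<nu> a \<noteq> \<infinity>" if "a \<in> range (\<lambda>i::nat. {- real i<..real i})" for a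
      using that nu_Ioc by auto
  qed (auto simp: E_eq)
  have "(\<integral>\<^sup>+x. \<psi> x * w (norm_n n x) * indicator {0<..} (norm_n n x) \<partial>LL n) = (\<integral>\<^sup>+x. w (norm_n n x) \<partial>D)"
    unfolding D_def by (subst nn_integral_density) (auto intro!: nn_integral_cong simp: ac_simps)
  also have "\<dots> = (\<integral>\<^sup>+s. w s \<partial>\<nu>)"
    unfolding \<nu>_def by (rule nn_integral_distr[symmetric]) auto
  also have "\<dots> = (\<integral>\<^sup>+s. w s \<partial>\<mu>)" using \<open>\<nu> = \<mu>\<close> by simp
  also have "\<dots> = (\<integral>\<^sup>+s. G * (w s * ennreal (real n * s^(n-1)) * indicator {0<..} s) \<partial>lborel)"
    unfolding \<mu>_def by (subst nn_integral_density) (auto intro!: nn_integral_cong simp: ac_simps)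
  also have "\<dots> = G * (\<integral>\<^sup>+s. w s * ennreal (real n * s^(n-1)) * indicator {0<..} s \<partial>lborel)"
    by (rule nn_integral_cmult) auto
  finally show ?thesis unfolding G_def .
qed

definition Mom :: "nat \<Rightarrow> real" where
  "Mom k = (\<integral>x. indicator {0..} x *\<^sub>R (exp (- x\<^sup>2) * x ^ k) \<partial>lborel)"

lemma Mom_hasint: "has_bochner_integral lborel (\<lambda>x::real. indicator {0..} x *\<^sub>R (exp (- x\<^sup>2) * x ^ k)) (Mom k)"
proof (cases "even k")
  case True
  then obtain j where k: "k = 2 * j" by (auto elim: evenE)
  show ?thesis using gaussian_moment_even_pos[of j] unfolding k Mom_def
    by (simp add: has_bochner_integral_iff)
next
  case False
  then obtain j where k: "k = 2 * j + 1" by (auto elim: oddE)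
  show ?thesis using gaussian_moment_odd_pos[of j] unfolding k Mom_def
    by (simp add: has_bochner_integral_iff)
qed

lemma Mom_even: "Mom (2 * j) = (sqrt pi / 2) * (fact (2 * j) / (2 ^ (2 * j) * fact j))"
  unfolding Mom_def by (rule has_bochner_integral_integral_eq[OF gaussian_moment_even_pos[of j]])

lemma Mom_odd: "Mom (2 * j + 1) = fact j / 2"
  unfolding Mom_def by (rule has_bochner_integral_integral_eq[OF gaussian_moment_odd_pos[of j]])

lemma Mom_pos: "Mom k > 0"
proof (cases "even k")
  case True
  then obtain j where k: "k = 2 * j" by (auto elim: evenE)
  show ?thesis unfolding k Mom_even by simp
next
  case False
  then obtain j where k: "k = 2 * j + 1" by (auto elim: oddE)
  show ?thesis unfolding k Mom_odd by simp
qed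

lemma Mom_rec: "Mom (k + 2) = (real k + 1) / 2 * Mom k"
proof (cases "even k")
  case True
  then obtain j where k: "k = 2 * j" by (auto elim: evenE)
  have e: "k + 2 = 2 * (j + 1)" using k by simp
  have f1: "fact (2 * (j + 1)) = (2 * real j + 2) * (2 * real j + 1) * (fact (2 * j) :: real)"
    by (simp add: fact_Suc algebra_simps)
  have f2: "fact (j + 1) = (real j + 1) * (fact j :: real)"
    by (simp add: fact_Suc algebra_simps)
  have p: "(2::real) ^ (2 * (j + 1)) = 4 * 2 ^ (2 * j)" by (simp add: power_add)
  have "fact (2 * (j + 1)) / (2 ^ (2 * (j + 1)) * fact (j + 1))
      = ((2 * real j + 2) * (2 * real j + 1)) / (4 * (real j + 1)) * ((fact (2 * j) :: real) / (2 ^ (2 * j) * fact j))"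
    unfolding f1 f2 p by (simp add: field_simps)
  also have "((2 * real j + 2) * (2 * real j + 1)) / (4 * (real j + 1)) = (real k + 1) / 2"
    unfolding k by (simp add: field_simps)
  finally show ?thesis unfolding e Mom_even unfolding k Mom_even by (simp add: k)
next
  case False
  then obtain j where k: "k = 2 * j + 1" by (auto elim: oddE)
  have e: "k + 2 = 2 * (j + 1) + 1" using k by simp
  show ?thesis unfolding e Mom_odd unfolding k Mom_odd
    by (simp add: fact_Suc field_simps)
qed

lemma Mom_logconvex: "(Mom (k + 1))\<^sup>2 \<le> Mom k * Mom (k + 2)"
proof -
  define l where "l = Mom (k + 1) / Mom k"
  let ?f = "\<lambda>j x::real. indicator {0..} x *\<^sub>R (exp (- x\<^sup>2) * x ^ j)"
  have "has_bochner_integral lborel (\<lambda>x. ?f (k + 2) x - 2 * l * ?f (k + 1) x + l\<^sup>2 * ?f k x)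
          (Mom (k + 2) - 2 * l * Mom (k + 1) + l\<^sup>2 * Mom k)"
    by (intro has_bochner_integral_add has_bochner_integral_diff has_bochner_integral_mult_right Mom_hasint)
  moreover have "(\<lambda>x. ?f (k + 2) x - 2 * l * ?f (k + 1) x + l\<^sup>2 * ?f k x)
      = (\<lambda>x. indicator {0..} x * (exp (- x\<^sup>2) * x ^ k * (x - l)\<^sup>2))"
    by (auto simp: fun_eq_iff power2_eq_square algebra_simps indicator_def)
  ultimately have hb: "has_bochner_integral lborel (\<lambda>x. indicator {0..} x * (exp (- x\<^sup>2) * x ^ k * (x - l)\<^sup>2))
          (Mom (k + 2) - 2 * l * Mom (k + 1) + l\<^sup>2 * Mom k)" by simp
  have "0 \<le> Mom (k + 2) - 2 * l * Mom (k + 1) + l\<^sup>2 * Mom k"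
    unfolding has_bochner_integral_integral_eq[OF hb, symmetric] by (intro integral_nonneg_AE AE_I2) (auto simp: indicator_def)
  then show ?thesis
    using Mom_pos[of k] unfolding l_def by (simp add: field_simps power2_eq_square)
qed

lemma Mom_ratio_bounds:
  assumes "k \<ge> 1"
  shows "2 / (real k + 1) \<le> (Mom k / Mom (k + 1))\<^sup>2" and "(Mom k / Mom (k + 1))\<^sup>2 \<le> 2 / real k"
proof -
  define r where "r j = Mom j / Mom (j + 1)" for j
  have rpos: "r j > 0" for j unfolding r_def using Mom_pos by simp
  have prod: "r j * r (j + 1) = 2 / (real j + 1)" for j
  proof -
    have "r j * r (j + 1) = Mom j / Mom (j + 2)"
      unfolding r_def using Mom_pos[of "j+1"] by (simp add: add.assoc)
    also have "\<dots> = 2 / (real j + 1)"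
      proof -
      have m: "Mom j > 0" using Mom_pos[of j] by auto
      have gen: "a / (c / 2 * a) = 2 / c" if "a > 0" "c > 0" for a c :: real
        using that by (simp add: field_simps)
      show ?thesis unfolding Mom_rec by (rule gen[OF m]) simp
    qed
    finally show ?thesis .
  qed
  have dec: "r (j + 1) \<le> r j" for j
    unfolding r_def using Mom_logconvex[of j] Mom_pos[of j] Mom_pos[of "j+1"] Mom_pos[of "j+2"]
    by (simp add: field_simps power2_eq_square add.assoc)
  have "2 / (real k + 1) = r k * r (k + 1)" using prod by simp
  also have "\<dots> \<le> r k * r k" using dec[of k] rpos[of k] by (intro mult_left_mono) auto
  finally show "2 / (real k + 1) \<le> (Mom k / Mom (k + 1))\<^sup>2" unfolding r_def by (simp add: power2_eq_square)
  obtain j where k: "k = j + 1" using assms by (metis add.commute le_Suc_ex)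
  have "r k * r k \<le> r j * r k" using dec[of j] rpos[of k] k by (intro mult_right_mono) auto
  also have "\<dots> = 2 / real k" using prod[of j] k by simp
  finally show "(Mom k / Mom (k + 1))\<^sup>2 \<le> 2 / real k" unfolding r_def by (simp add: power2_eq_square)
qed

definition Kc :: "nat \<Rightarrow> real" where
  "Kc n = Mom (n - 1) / (2 * sqrt pi * Mom n)"

lemma Kc_pos: "Kc n > 0"
  unfolding Kc_def using Mom_pos by simp

lemma Kc_asymp: "(\<lambda>n. sqrt (real n) * Kc n) \<longlonglongrightarrow> 1 / sqrt (2 * pi)"
proof -
  define q where "q n = real n * (Mom (n - 1) / Mom n)\<^sup>2" for n
  have lo: "2 \<le> q n" if "n \<ge> 2" for n
  proof -
    have "2 / (real (n - 1) + 1) \<le> (Mom (n - 1) / Mom (n - 1 + 1))\<^sup>2"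
      using Mom_ratio_bounds(1)[of "n - 1"] that by simp
    then show ?thesis using that unfolding q_def by (simp add: of_nat_diff field_simps)
  qed
  have hi: "q n \<le> 2 * real n / (real n - 1)" if "n \<ge> 2" for n
  proof -
    have "(Mom (n - 1) / Mom (n - 1 + 1))\<^sup>2 \<le> 2 / real (n - 1)"
      using Mom_ratio_bounds(2)[of "n - 1"] that by simp
    then have "real n * (Mom (n - 1) / Mom n)\<^sup>2 \<le> real n * (2 / real (n - 1))"
      using that by (intro mult_left_mono) auto
    moreover have "real n * (2 / real (n - 1)) = 2 * real n / (real n - 1)"
      using that by (simp add: of_nat_diff)
    ultimately show ?thesis unfolding q_def by simp
  qed
  have lim2: "(\<lambda>n. 2 * real n / (real n - 1)) \<longlonglongrightarrow> 2"
  proof -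
    have "(\<lambda>n. 2 / (1 - 1 / real n)) \<longlonglongrightarrow> 2 / (1 - 0)"
      by (intro tendsto_intros lim_inverse_n) auto
    then have l: "(\<lambda>n. 2 / (1 - 1 / real n)) \<longlonglongrightarrow> 2" by simp
    have "eventually (\<lambda>n. 2 / (1 - 1 / real n) = 2 * real n / (real n - 1)) sequentially"
      using eventually_ge_at_top[of "2::nat"] by eventually_elim (simp add: field_simps)
    then show ?thesis by (rule Lim_transform_eventually[OF l])
  qed
  have qlim: "q \<longlonglongrightarrow> 2"
    by (rule tendsto_sandwich[OF _ _ tendsto_const lim2])
       (auto intro!: eventually_mono[OF eventually_ge_at_top[of 2]] lo hi)
  have "(\<lambda>n. sqrt (q n) / (2 * sqrt pi)) \<longlonglongrightarrow> sqrt 2 / (2 * sqrt pi)"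
    by (intro tendsto_intros qlim) auto
  moreover have "sqrt (q n) / (2 * sqrt pi) = sqrt (real n) * Kc n" for n
    unfolding q_def Kc_def using Mom_pos[of n] Mom_pos[of "n-1"]
    by (simp add: real_sqrt_mult real_sqrt_divide)
  moreover have "sqrt 2 / (2 * sqrt pi) = 1 / sqrt (2 * pi)"
    by (simp add: real_sqrt_mult field_simps)
  ultimately show ?thesis by simp
qed

lemma half_normal_moment:
  assumes s: "0 < s"
  shows "(\<integral>\<^sup>+z. ennreal (normal_density 0 s z) * ennreal z \<partial>lborel) = ennreal (s / sqrt (2 * pi))"
proof -
  have h1: "has_bochner_integral lborel (\<lambda>x. normal_density 0 s x * \<bar>x - 0\<bar>^(2 * 0 + 1)) (2^0 * s^(2 * 0 + 1) * fact 0 * sqrt (2 / pi))"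
    by (rule normal_moment_abs_odd[OF s])
  have h2: "has_bochner_integral lborel (\<lambda>x. normal_density 0 s x * x) 0"
    by (rule normal_moment_nz_1[OF s])
  have "has_bochner_integral lborel (\<lambda>x. (normal_density 0 s x * \<bar>x - 0\<bar>^(2 * 0 + 1) + normal_density 0 s x * x) / 2)
     ((2^0 * s^(2 * 0 + 1) * fact 0 * sqrt (2 / pi) + 0) / 2)"
    by (intro has_bochner_integral_divide_zero has_bochner_integral_add h1 h2)
  then have hb: "has_bochner_integral lborel (\<lambda>x. normal_density 0 s x * max x 0) (s * sqrt (2 / pi) / 2)"
    by (rule has_bochner_integral_cong[THEN iffD1, rotated -1]) (auto simp: max_def field_simps)
  have "(\<integral>\<^sup>+z. ennreal (normal_density 0 s z) * ennreal z \<partial>lborel) = (\<integral>\<^sup>+z. ennreal (normal_density 0 s z * max z 0) \<partial>lborel)"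
    by (intro nn_integral_cong) (auto simp: ennreal_mult' max_def ennreal_neg)
  also have "\<dots> = ennreal (s * sqrt (2 / pi) / 2)"
  proof -
    have I: "integral\<^sup>L lborel (\<lambda>x. normal_density 0 s x * max x 0) = s * sqrt (2 / pi) / 2"
      by (rule has_bochner_integral_integral_eq[OF hb])
    have "integrable lborel (\<lambda>x. normal_density 0 s x * max x 0)"
      using hb by (simp add: has_bochner_integral_iff)
    then show ?thesis
      by (subst nn_integral_eq_integral) (auto simp: I)
  qed
  also have "s * sqrt (2 / pi) / 2 = s / sqrt (2 * pi)"
    by (simp add: real_sqrt_divide real_sqrt_mult field_simps)
  finally show ?thesis .
qed

definition PG :: "nat \<Rightarrow> (nat \<Rightarrow> real) measure" where
  "PG n = PiM {..<n} (\<lambda>_. density lborel (\<lambda>x. ennreal (normal_density 0 (1 / sqrt 2) x)))"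

lemma normal_half: "normal_density 0 (1 / sqrt 2) x = exp (- x\<^sup>2) / sqrt pi"
  by (simp add: normal_density_def power_divide)

lemma PiM_density_nn:
  fixes I :: "'i set" and \<phi> :: "real \<Rightarrow> real"
  assumes fin: "finite I" and \<phi>m[measurable]: "\<phi> \<in> borel_measurable borel" and \<phi>nn: "\<And>x. 0 \<le> \<phi> x"
    and sf: "sigma_finite_measure (density lborel \<phi>)"
  shows "f \<in> borel_measurable (PiM I (\<lambda>_. lborel)) \<Longrightarrow>
    (\<integral>\<^sup>+x. f x \<partial>PiM I (\<lambda>_. density lborel \<phi>)) = (\<integral>\<^sup>+x. f x * (\<Prod>i\<in>I. ennreal (\<phi> (x i))) \<partial>PiM I (\<lambda>_. lborel))"
  using fin
proof (induction I arbitrary: f rule: finite_induct)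
  case empty
  show ?case by (simp add: PiM_empty nn_integral_count_space_finite)
next
  case (insert j I)
  interpret L: product_sigma_finite "\<lambda>_::'i. (lborel::real measure)" by (rule psf_lborel)
  interpret N: product_sigma_finite "\<lambda>_::'i. density lborel \<phi>"
    using sf by (simp add: product_sigma_finite_def)
  have sets_eq: "sets (PiM J (\<lambda>_::'i. density lborel \<phi>)) = sets (PiM J (\<lambda>_. lborel))" for J
    by (intro sets_PiM_cong) auto
  note fm[measurable] = insert.prems
  have fmN: "f \<in> borel_measurable (PiM (insert j I) (\<lambda>_. density lborel \<phi>))"
    using fm measurable_cong_sets[OF sets_eq refl] by blast
  define F where "F = (\<lambda>x. \<integral>\<^sup>+y. ennreal (\<phi> y) * f (x(j:=y)) \<partial>lborel)"
  have Fm[measurable]: "F \<in> borel_measurable (PiM I (\<lambda>_. lborel))"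
  proof -
    have "(\<lambda>x. ennreal (\<phi> (x j)) * f x) \<in> borel_measurable (PiM (insert j I) (\<lambda>_. lborel))"
      by measurable
    from measurable_inner_update[OF this] show ?thesis unfolding F_def by simp
  qed
  have "(\<integral>\<^sup>+x. f x \<partial>PiM (insert j I) (\<lambda>_. density lborel \<phi>))
      = (\<integral>\<^sup>+x. \<integral>\<^sup>+y. f (x(j:=y)) \<partial>density lborel \<phi> \<partial>PiM I (\<lambda>_. density lborel \<phi>))"
    by (rule N.product_nn_integral_insert[OF insert(1,2) fmN])
  also have "\<dots> = (\<integral>\<^sup>+x. F x \<partial>PiM I (\<lambda>_. density lborel \<phi>))"
  proof (intro nn_integral_cong)
    fix x assume x: "x \<in> space (PiM I (\<lambda>_. density lborel \<phi>))"
    then have x': "x \<in> space (PiM I (\<lambda>_. lborel))" by (simp add: space_PiM)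
    have gm: "(\<lambda>y. f (x(j := y))) \<in> borel_measurable lborel"
      using measurable_comp[OF measurable_component_update[OF x' insert(2)] fm] by (simp add: o_def)
    show "(\<integral>\<^sup>+y. f (x(j:=y)) \<partial>density lborel \<phi>) = F x"
      unfolding F_def using gm by (subst nn_integral_density) auto
  qed
  also have "\<dots> = (\<integral>\<^sup>+x. F x * (\<Prod>i\<in>I. ennreal (\<phi> (x i))) \<partial>PiM I (\<lambda>_. lborel))"
    by (rule insert.IH[OF Fm])
  also have "\<dots> = (\<integral>\<^sup>+x. \<integral>\<^sup>+y. (\<lambda>x. f x * (\<Prod>i\<in>insert j I. ennreal (\<phi> (x i)))) (x(j:=y)) \<partial>lborel \<partial>PiM I (\<lambda>_. lborel))"
  proof (intro nn_integral_cong)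
    fix x :: "'i \<Rightarrow> real" assume x: "x \<in> space (PiM I (\<lambda>_. lborel))"
    have "F x * (\<Prod>i\<in>I. ennreal (\<phi> (x i))) = (\<integral>\<^sup>+y. ennreal (\<phi> y) * f (x(j:=y)) * (\<Prod>i\<in>I. ennreal (\<phi> (x i))) \<partial>lborel)"
      unfolding F_def
      using measurable_comp[OF measurable_component_update[OF x insert(2)] fm]
      by (subst nn_integral_multc) (auto simp: o_def)
    also have "\<dots> = (\<integral>\<^sup>+y. (\<lambda>x. f x * (\<Prod>i\<in>insert j I. ennreal (\<phi> (x i)))) (x(j:=y)) \<partial>lborel)"
    proof (intro nn_integral_cong)
      fix y
      have "(\<Prod>i\<in>I. ennreal (\<phi> ((x(j:=y)) i))) = (\<Prod>i\<in>I. ennreal (\<phi> (x i)))"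
        using insert(2) by (intro prod.cong) auto
      then show "ennreal (\<phi> y) * f (x(j:=y)) * (\<Prod>i\<in>I. ennreal (\<phi> (x i))) = f (x(j:=y)) * (\<Prod>i\<in>insert j I. ennreal (\<phi> ((x(j:=y)) i)))"
        using insert(1,2) by (simp add: ac_simps)
    qed
    finally show "F x * (\<Prod>i\<in>I. ennreal (\<phi> (x i))) = (\<integral>\<^sup>+y. (\<lambda>x. f x * (\<Prod>i\<in>insert j I. ennreal (\<phi> (x i)))) (x(j:=y)) \<partial>lborel)" .
  qed
  also have "\<dots> = (\<integral>\<^sup>+x. f x * (\<Prod>i\<in>insert j I. ennreal (\<phi> (x i))) \<partial>PiM (insert j I) (\<lambda>_. lborel))"
    by (rule L.product_nn_integral_insert[symmetric, OF insert(1,2)]) measurable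
  finally show ?case .
qed

lemma PG_integral:
  assumes "f \<in> borel_measurable (LL n)"
  shows "(\<integral>\<^sup>+x. f x \<partial>PG n) = (\<integral>\<^sup>+x. f x * ennreal ((1 / sqrt pi)^n * exp (- (norm_n n x)\<^sup>2)) \<partial>LL n)"
proof -
  interpret N: prob_space "density lborel (\<lambda>x. ennreal (normal_density 0 (1 / sqrt 2) x))"
    by (rule prob_space_normal_density) (rule divide_pos_pos, auto)
  have "(\<integral>\<^sup>+x. f x \<partial>PG n) = (\<integral>\<^sup>+x. f x * (\<Prod>i\<in>{..<n}. ennreal (normal_density 0 (1 / sqrt 2) (x i))) \<partial>LL n)"
    unfolding PG_def
    by (rule PiM_density_nn[OF _ _ _ N.sigma_finite_measure_axioms assms]) auto
  also have "\<dots> = (\<integral>\<^sup>+x. f x * ennreal ((1 / sqrt pi)^n * exp (- (norm_n n x)\<^sup>2)) \<partial>LL n)"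
  proof (intro nn_integral_cong)
    fix x :: "nat \<Rightarrow> real"
    have "(\<Prod>i\<in>{..<n}. ennreal (normal_density 0 (1 / sqrt 2) (x i))) = ennreal (\<Prod>i\<in>{..<n}. exp (- (x i)\<^sup>2) / sqrt pi)"
      by (simp add: prod_ennreal normal_half)
    also have "(\<Prod>i\<in>{..<n}. exp (- (x i)\<^sup>2) / sqrt pi) = (1 / sqrt pi)^n * exp (- (\<Sum>i<n. (x i)\<^sup>2))"
      by (simp add: prod_dividef exp_sum[symmetric] sum_negf power_one_over field_simps)
    also have "(\<Sum>i<n. (x i)\<^sup>2) = (norm_n n x)\<^sup>2"
      unfolding norm_n_def by (simp add: sum_nonneg)
    finally show "f x * (\<Prod>i\<in>{..<n}. ennreal (normal_density 0 (1 / sqrt 2) (x i))) = f x * ennreal ((1 / sqrt pi)^n * exp (- (norm_n n x)\<^sup>2))"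
      by simp
  qed
  finally show ?thesis .
qed

lemma PG_inner:
  assumes n: "n \<ge> 1"
  shows "(\<integral>\<^sup>+x. ennreal (inner_n n y x) \<partial>PG n) = ennreal (norm_n n y / (2 * sqrt pi))"
proof -
  define s :: real where "s = 1 / sqrt 2"
  have s: "s > 0" unfolding s_def by (rule divide_pos_pos) auto
  define N where "N = density lborel (\<lambda>x. ennreal (normal_density 0 s x))"
  have Nprob: "prob_space N" unfolding N_def by (rule prob_space_normal_density) (rule s)
  have PGN: "PG n = PiM {..<n} (\<lambda>_. N)" unfolding PG_def N_def s_def ..
  interpret P: prob_space "PG n"
    unfolding PGN by (rule prob_space_PiM) (rule Nprob)
  have setsN: "sets N = sets borel" unfolding N_def by simp
  have compN: "distr (PG n) N (\<lambda>x. x i) = N" if "i < n" for i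
    unfolding PGN by (rule distr_PiM_component) (use Nprob that in auto)
  have compm: "(\<lambda>x. x i) \<in> measurable (PG n) N" if "i < n" for i
    unfolding PGN using that by (intro measurable_component_singleton) auto
  have compb: "(\<lambda>x. x i) \<in> borel_measurable (PG n)" if "i < n" for i
    using compm[OF that] measurable_cong_sets[OF refl setsN] by blast
  have comp_distr: "distributed (PG n) lborel (\<lambda>x. x i) (\<lambda>z. ennreal (normal_density 0 s z))" if "i < n" for i
  proof -
    have "distr (PG n) lborel (\<lambda>x. x i) = distr (PG n) N (\<lambda>x. x i)"
      by (rule distr_cong) (auto simp: setsN)
    then show ?thesis unfolding distributed_def using compN[OF that] compb[OF that]
      by (auto simp: N_def)
  qed
  have ind: "P.indep_vars (\<lambda>_. borel) (\<lambda>i x. x i) {..<n}"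
  proof (subst P.indep_vars_iff_distr_eq_PiM')
    have "0 \<in> {..<n}" using n by simp
    then show "{..<n} \<noteq> {}" by blast
    show "\<And>i. i \<in> {..<n} \<Longrightarrow> (\<lambda>x. x i) \<in> borel_measurable (PG n)" using compb by auto
    have "distr (PG n) (PiM {..<n} (\<lambda>_. borel)) (\<lambda>x. \<lambda>i\<in>{..<n}. x i) = distr (PG n) (PG n) (\<lambda>x. x)"
      by (rule distr_cong) (auto simp: PGN setsN space_PiM PiE_def extensional_restrict intro!: sets_PiM_cong)
    also have "\<dots> = PG n" by (rule distr_id)
    also have "\<dots> = PiM {..<n} (\<lambda>i. distr (PG n) borel (\<lambda>x. x i))"
      unfolding PGN[symmetric]
    proof (subst PGN, intro PiM_cong refl)
      fix i assume i: "i \<in> {..<n}"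
      have "distr (PG n) borel (\<lambda>x. x i) = distr (PG n) N (\<lambda>x. x i)"
        by (rule distr_cong) (auto simp: setsN)
      then show "N = distr (PG n) borel (\<lambda>x. x i)" using compN i by simp
    qed
    finally show "distr (PG n) (PiM {..<n} (\<lambda>_. borel)) (\<lambda>x. \<lambda>i\<in>{..<n}. x i) = PiM {..<n} (\<lambda>i. distr (PG n) borel (\<lambda>x. x i))" .
  qed
  define J where "J = {i\<in>{..<n}. y i \<noteq> 0}"
  have innerJ: "inner_n n y x = (\<Sum>i\<in>J. y i * x i)" for x
    unfolding inner_n_def J_def by (rule sum.mono_neutral_right) auto
  have normJ: "(\<Sum>i\<in>J. (\<bar>y i\<bar> * s)\<^sup>2) = s\<^sup>2 * (\<Sum>i<n. (y i)\<^sup>2)"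
  proof -
    have "(\<Sum>i\<in>J. (\<bar>y i\<bar> * s)\<^sup>2) = s\<^sup>2 * (\<Sum>i\<in>J. (y i)\<^sup>2)"
      by (simp add: sum_distrib_left power_mult_distrib mult.commute)
    also have "(\<Sum>i\<in>J. (y i)\<^sup>2) = (\<Sum>i<n. (y i)\<^sup>2)"
      unfolding J_def by (rule sum.mono_neutral_left) auto
    finally show ?thesis .
  qed
  show ?thesis
  proof (cases "J = {}")
    case True
    then have "inner_n n y x = 0" for x using innerJ by simp
    moreover have "norm_n n y = 0"
      using True unfolding norm_n_def J_def by (auto intro!: sum.neutral)
    ultimately show ?thesis by simp
  next
    case False
    have finJ: "finite J" unfolding J_def by auto
    have indJ: "P.indep_vars (\<lambda>_. borel) (\<lambda>i x. y i * x i) J"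
      using P.indep_vars_compose2[OF P.indep_vars_subset[OF ind], of J "\<lambda>i z. y i * z" "\<lambda>_. borel"]
      unfolding J_def by auto
    have distJ: "distributed (PG n) lborel (\<lambda>x. y i * x i) (\<lambda>z. ennreal (normal_density 0 (\<bar>y i\<bar> * s) z))" if "i \<in> J" for i
    proof -
      have "i < n" "y i \<noteq> 0" using that unfolding J_def by auto
      from P.normal_density_affine[OF comp_distr[OF \<open>i < n\<close>] s \<open>y i \<noteq> 0\<close>, of 0]
      show ?thesis by simp
    qed
    have posJ: "0 < \<bar>y i\<bar> * s" if "i \<in> J" for i
      using that s unfolding J_def by auto
    have "distributed (PG n) lborel (\<lambda>x. \<Sum>i\<in>J. y i * x i)
        (normal_density (\<Sum>i\<in>J. 0) (sqrt (\<Sum>i\<in>J. (\<bar>y i\<bar> * s)\<^sup>2)))"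
      by (rule P.sum_indep_normal[OF finJ False indJ posJ distJ])
    moreover have "sqrt (\<Sum>i\<in>J. (\<bar>y i\<bar> * s)\<^sup>2) = s * norm_n n y"
      unfolding normJ norm_n_def using s by (simp add: real_sqrt_mult)
    moreover have "inner_n n y = (\<lambda>x. \<Sum>i\<in>J. y i * x i)" using innerJ by (simp add: fun_eq_iff)
    ultimately have D: "distributed (PG n) lborel (inner_n n y) (normal_density 0 (s * norm_n n y))"
      by simp
    have npos: "norm_n n y > 0"
    proof -
      obtain i where "i \<in> J" using False by auto
      then have "i < n" "y i \<noteq> 0" unfolding J_def by auto
      then show ?thesis using abs_le_norm_n[of i n y] by auto
    qed
    have "(\<integral>\<^sup>+x. ennreal (inner_n n y x) \<partial>PG n) = (\<integral>\<^sup>+z. ennreal (normal_density 0 (s * norm_n n y) z) * ennreal z \<partial>lborel)"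
      by (rule distributed_nn_integral[OF D, symmetric]) auto
    also have "\<dots> = ennreal (s * norm_n n y / sqrt (2 * pi))"
      by (rule half_normal_moment) (use s npos in auto)
    also have "s * norm_n n y / sqrt (2 * pi) = norm_n n y / (2 * sqrt pi)"
      unfolding s_def by (simp add: real_sqrt_mult field_simps)
    finally show ?thesis .
  qed
qed

lemma Mom_nn: "(\<integral>\<^sup>+s. ennreal (exp (- s\<^sup>2) * s ^ k) * indicator {0<..} s \<partial>lborel) = ennreal (Mom k)"
proof -
  have "(\<integral>\<^sup>+s. ennreal (exp (- s\<^sup>2) * s ^ k) * indicator {0<..} s \<partial>lborel)
      = (\<integral>\<^sup>+s. ennreal (indicator {0..} s *\<^sub>R (exp (- s\<^sup>2) * s ^ k)) \<partial>lborel)"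
    by (intro nn_integral_cong_AE, rule AE_mp[OF AE_lborel_singleton[of 0]])
       (auto simp: indicator_def)
  also have "\<dots> = ennreal (Mom k)"
    using Mom_hasint[of k] unfolding Mom_def
    by (subst nn_integral_eq_integral) (auto simp: has_bochner_integral_iff indicator_def)
  finally show ?thesis .
qed

definition Bst :: "nat \<Rightarrow> (nat \<Rightarrow> real) set" where
  "Bst n = {x \<in> space (LL n). 0 < norm_n n x \<and> norm_n n x \<le> 1}"

definition proj :: "nat \<Rightarrow> (nat \<Rightarrow> real) \<Rightarrow> (nat \<Rightarrow> real)" where
  "proj n x = restrict (\<lambda>i. x i / norm_n n x) {..<n}"

lemma sph_measure_alt: "sph_measure n = distr (uniform_measure (LL n) (Bst n)) (LL n) (proj n)"
  unfolding sph_measure_def Bst_def proj_def lebesgue_n_LL ..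

lemma proj_meas[measurable]: "proj n \<in> measurable (LL n) (LL n)"
  unfolding proj_def by (rule measurable_restrict) measurable

lemma Bst_sets[measurable]: "Bst n \<in> sets (LL n)"
  unfolding Bst_def by measurable

lemma proj_scale: "c > 0 \<Longrightarrow> proj n (restrict (\<lambda>i. c * x i) {..<n}) = proj n x"
proof -
  assume c: "c > 0"
  have r: "norm_n n (restrict (\<lambda>i. c * x i) {..<n}) = c * norm_n n x"
    using c by (intro norm_n_scale) simp
  show ?thesis
  proof
    fix i show "proj n (restrict (\<lambda>i. c * x i) {..<n}) i = proj n x i"
    proof (cases "i < n")
      case True
      then have "proj n (restrict (\<lambda>i. c * x i) {..<n}) i = (c * x i) / (c * norm_n n x)"
        unfolding proj_def r by simp
      also have "\<dots> = x i / norm_n n x" using c by simp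
      finally show ?thesis unfolding proj_def using True by simp
    qed (simp add: proj_def)
  qed
qed

lemma proj_abs_le: "i < n \<Longrightarrow> \<bar>proj n x i\<bar> \<le> 1"
proof (cases "i < n \<and> norm_n n x > 0")
  case True
  then have "\<bar>x i\<bar> \<le> norm_n n x" using abs_le_norm_n by blast
  then have "\<bar>x i\<bar> / norm_n n x \<le> 1" using True by (simp add: divide_le_eq_1_pos)
  then show ?thesis using True unfolding proj_def by (simp add: abs_divide)
next
  case False
  assume i: "i < n"
  then have "norm_n n x = 0" using False norm_n_nonneg[of n x] by auto
  then show ?thesis unfolding proj_def using i by auto
qed

lemma inner_proj_bound: "inner_n n y (proj n x) \<le> (\<Sum>i<n. \<bar>y i\<bar>)"
  unfolding inner_n_def
proof (rule sum_mono)
  fix i assume i: "i \<in> {..<n}"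
  have "y i * proj n x i \<le> \<bar>y i\<bar> * \<bar>proj n x i\<bar>"
    by (metis abs_ge_self abs_mult)
  also have "\<dots> \<le> \<bar>y i\<bar> * 1"
    by (rule mult_left_mono[OF proj_abs_le]) (use i in auto)
  finally show "y i * proj n x i \<le> \<bar>y i\<bar>" by simp
qed

lemma inner_proj: "norm_n n x > 0 \<Longrightarrow> inner_n n y x = norm_n n x * inner_n n y (proj n x)"
proof -
  assume r: "norm_n n x > 0"
  have "inner_n n y (proj n x) = (\<Sum>i<n. y i * x i / norm_n n x)"
    unfolding inner_n_def proj_def by (intro sum.cong) auto
  also have "\<dots> = inner_n n y x / norm_n n x"
    unfolding inner_n_def by (simp add: sum_divide_distrib)
  finally show ?thesis using r by simp
qed

lemma H_formula:
  assumes n: "n \<ge> 1"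
  shows "(\<integral>\<^sup>+u. ennreal (inner_n n y u) \<partial>sph_measure n) = ennreal (norm_n n y * Kc n)"
proof -
  define c :: real where "c = 1 / sqrt pi"
  have c: "c > 0" unfolding c_def by simp
  define \<psi> where "\<psi> x = ennreal (inner_n n y (proj n x))" for x
  have \<psi>m[measurable]: "\<psi> \<in> borel_measurable (LL n)" unfolding \<psi>_def by measurable
  have hom: "\<And>x c. x \<in> space (LL n) \<Longrightarrow> c > 0 \<Longrightarrow> \<psi> (restrict (\<lambda>i. c * x i) {..<n}) = \<psi> x"
    unfolding \<psi>_def using proj_scale by simp
  have bnd: "\<And>x. \<psi> x \<le> ennreal (\<Sum>i<n. \<bar>y i\<bar>)"
    unfolding \<psi>_def using inner_proj_bound by (simp add: ennreal_leI)
  define G where "G = (\<integral>\<^sup>+x. \<psi> x * indicator {0<..1} (norm_n n x) \<partial>LL n)"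
  define V where "V = (\<integral>\<^sup>+x. (\<lambda>_. 1) x * indicator {0<..1} (norm_n n x) \<partial>LL n)"
  have V_eq: "V = emeasure (LL n) (Bst n)"
  proof -
    have "V = (\<integral>\<^sup>+x. indicator (Bst n) x \<partial>LL n)"
      unfolding V_def Bst_def by (intro nn_integral_cong) (auto simp: indicator_def)
    then show ?thesis by simp
  qed
  have G_eq: "(\<integral>\<^sup>+x. \<psi> x * indicator (Bst n) x \<partial>LL n) = G"
    unfolding G_def Bst_def by (intro nn_integral_cong) (auto simp: indicator_def)
  have H_eq: "(\<integral>\<^sup>+u. ennreal (inner_n n y u) \<partial>sph_measure n) = G / V"
  proof -
    have "(\<integral>\<^sup>+u. ennreal (inner_n n y u) \<partial>sph_measure n) = (\<integral>\<^sup>+x. \<psi> x \<partial>uniform_measure (LL n) (Bst n))"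
    proof -
      have se: "sets (uniform_measure (LL n) (Bst n)) = sets (LL n)" by simp
      have pm: "proj n \<in> measurable (uniform_measure (LL n) (Bst n)) (LL n)"
        using measurable_cong_sets[OF se refl] proj_meas by blast
      show ?thesis unfolding sph_measure_alt \<psi>_def
        by (rule nn_integral_distr[OF pm]) measurable
    qed
    also have "\<dots> = G / V"
      by (subst nn_integral_uniform_measure) (auto simp: G_eq V_eq)
    finally show ?thesis .
  qed
  have w_int: "(\<integral>\<^sup>+s. ennreal (s ^ j * c ^ n * exp (- s\<^sup>2)) * ennreal (real n * s ^ (n - 1)) * indicator {0<..} s \<partial>lborel)
      = ennreal (c ^ n * real n * Mom (n - 1 + j))" for j
  proof -
    have "(\<integral>\<^sup>+s. ennreal (s ^ j * c ^ n * exp (- s\<^sup>2)) * ennreal (real n * s ^ (n - 1)) * indicator {0<..} s \<partial>lborel)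
        = (\<integral>\<^sup>+s. ennreal (c ^ n * real n) * (ennreal (exp (- s\<^sup>2) * s ^ (n - 1 + j)) * indicator {0<..} s) \<partial>lborel)"
    proof (intro nn_integral_cong)
      fix s :: real
      show "ennreal (s ^ j * c ^ n * exp (- s\<^sup>2)) * ennreal (real n * s ^ (n - 1)) * indicator {0<..} s
          = ennreal (c ^ n * real n) * (ennreal (exp (- s\<^sup>2) * s ^ (n - 1 + j)) * indicator {0<..} s)"
      proof (cases "s > 0")
        case True
        have e: "s ^ j * c ^ n * exp (- s\<^sup>2) * (real n * s ^ (n - 1)) = c ^ n * real n * (exp (- s\<^sup>2) * s ^ (n - 1 + j))"
          by (simp add: power_add)
        have "ennreal (s ^ j * c ^ n * exp (- s\<^sup>2)) * ennreal (real n * s ^ (n - 1))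
            = ennreal (c ^ n * real n) * ennreal (exp (- s\<^sup>2) * s ^ (n - 1 + j))"
        proof -
          have n1: "0 \<le> s ^ j * c ^ n * exp (- s\<^sup>2)" using True c by simp
          have n2: "0 \<le> c ^ n * real n" using c by simp
          show ?thesis
            unfolding ennreal_mult'[symmetric, OF n1] ennreal_mult'[symmetric, OF n2] e ..
        qed
        then show ?thesis using True by (simp add: mult.assoc)
      qed (simp add: indicator_def)
    qed
    also have "\<dots> = ennreal (c ^ n * real n) * ennreal (Mom (n - 1 + j))"
      by (subst nn_integral_cmult) (auto simp: Mom_nn)
    also have "\<dots> = ennreal (c ^ n * real n * Mom (n - 1 + j))"
      using c by (simp add: ennreal_mult')
    finally show ?thesis .
  qed
  have "1 = (\<integral>\<^sup>+x. 1 \<partial>PG n)"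
  proof -
    interpret N: prob_space "density lborel (\<lambda>x. ennreal (normal_density 0 (1 / sqrt 2) x))"
      by (rule prob_space_normal_density) (rule divide_pos_pos, auto)
    interpret P: prob_space "PG n" unfolding PG_def
      by (rule prob_space_PiM) (rule N.prob_space_axioms)
    show ?thesis by (simp add: P.emeasure_space_1)
  qed
  also have "\<dots> = (\<integral>\<^sup>+x. 1 * ennreal (c ^ n * exp (- (norm_n n x)\<^sup>2)) \<partial>LL n)"
    unfolding c_def by (rule PG_integral) simp
  also have "\<dots> = (\<integral>\<^sup>+x. (\<lambda>_. 1) x * (\<lambda>s. ennreal (s ^ 0 * c ^ n * exp (- s\<^sup>2))) (norm_n n x) * indicator {0<..} (norm_n n x) \<partial>LL n)"
  proof (intro nn_integral_cong_AE)
    have nul: "{x\<in>space (LL n). norm_n n x = 0} \<in> null_sets (LL n)"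
      using singleton_null[OF n] by (simp add: null_sets_def)
    have "AE x in LL n. norm_n n x \<noteq> 0"
      by (rule AE_I'[OF nul]) auto
    then show "AE x in LL n. 1 * ennreal (c ^ n * exp (- (norm_n n x)\<^sup>2)) = (\<lambda>_. 1) x * (\<lambda>s. ennreal (s ^ 0 * c ^ n * exp (- s\<^sup>2))) (norm_n n x) * indicator {0<..} (norm_n n x)"
    proof (rule AE_mp, intro AE_I2 impI)
      fix x assume "norm_n n x \<noteq> 0"
      then have "norm_n n x > 0" using norm_n_nonneg[of n x] by auto
      then show "1 * ennreal (c ^ n * exp (- (norm_n n x)\<^sup>2)) = (\<lambda>_. 1) x * (\<lambda>s. ennreal (s ^ 0 * c ^ n * exp (- s\<^sup>2))) (norm_n n x) * indicator {0<..} (norm_n n x)"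
        by simp
    qed
  qed
  also have "\<dots> = V * (\<integral>\<^sup>+s. ennreal (s ^ 0 * c ^ n * exp (- s\<^sup>2)) * ennreal (real n * s ^ (n - 1)) * indicator {0<..} s \<partial>lborel)"
    unfolding V_def by (rule polar[OF n, where B=1]) auto
  also have "\<dots> = V * ennreal (c ^ n * real n * Mom (n - 1 + 0))"
    by (simp only: w_int)
  finally have Veq: "V * ennreal (c ^ n * real n * Mom (n - 1)) = 1" by simp
  have "ennreal (norm_n n y / (2 * sqrt pi)) = (\<integral>\<^sup>+x. ennreal (inner_n n y x) \<partial>PG n)"
    by (rule PG_inner[OF n, symmetric])
  also have "\<dots> = (\<integral>\<^sup>+x. ennreal (inner_n n y x) * ennreal (c ^ n * exp (- (norm_n n x)\<^sup>2)) \<partial>LL n)"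
    unfolding c_def by (rule PG_integral) measurable
  also have "\<dots> = (\<integral>\<^sup>+x. \<psi> x * (\<lambda>s. ennreal (s ^ 1 * c ^ n * exp (- s\<^sup>2))) (norm_n n x) * indicator {0<..} (norm_n n x) \<partial>LL n)"
  proof (intro nn_integral_cong)
    fix x assume x: "x \<in> space (LL n)"
    show "ennreal (inner_n n y x) * ennreal (c ^ n * exp (- (norm_n n x)\<^sup>2)) =
        \<psi> x * (\<lambda>s. ennreal (s ^ 1 * c ^ n * exp (- s\<^sup>2))) (norm_n n x) * indicator {0<..} (norm_n n x)"
    proof (cases "norm_n n x = 0")
      case True
      then have "x = (\<lambda>i\<in>{..<n}. 0)" using norm_n_zero_iff[OF x] by simp
      then have "inner_n n y x = 0" unfolding inner_n_def by simp
      then show ?thesis using True by simp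
    next
      case False
      then have r: "norm_n n x > 0" using norm_n_nonneg[of n x] by auto
      have "ennreal (inner_n n y x) * ennreal (c ^ n * exp (- (norm_n n x)\<^sup>2))
          = ennreal (inner_n n y (proj n x)) * ennreal (norm_n n x * (c ^ n * exp (- (norm_n n x)\<^sup>2)))"
        unfolding inner_proj[OF r, of y] using r c
        by (simp add: ennreal_mult''[symmetric] mult.assoc mult.left_commute)
      then show ?thesis using r unfolding \<psi>_def by (simp add: mult.assoc)
    qed
  qed
  also have "\<dots> = G * (\<integral>\<^sup>+s. ennreal (s ^ 1 * c ^ n * exp (- s\<^sup>2)) * ennreal (real n * s ^ (n - 1)) * indicator {0<..} s \<partial>lborel)"
    unfolding G_def by (rule polar[OF n \<psi>m hom bnd]) auto
  also have "\<dots> = G * ennreal (c ^ n * real n * Mom (n - 1 + 1))"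
    by (simp only: w_int)
  finally have Geq: "G * ennreal (c ^ n * real n * Mom n) = ennreal (norm_n n y / (2 * sqrt pi))"
    using n by simp
  define p where "p = c ^ n * real n * Mom n"
  define q where "q = c ^ n * real n * Mom (n - 1)"
  have p: "p > 0" unfolding p_def using c n Mom_pos by simp
  have q: "q > 0" unfolding q_def using c n Mom_pos by simp
  have G2: "G = ennreal (norm_n n y / (2 * sqrt pi) / p)"
  proof -
    have "G = G * (ennreal p * ennreal (1 / p))" using p by (simp add: ennreal_mult'[symmetric])
    also have "\<dots> = ennreal (norm_n n y / (2 * sqrt pi)) * ennreal (1 / p)"
      using Geq unfolding p_def by (simp add: mult.assoc[symmetric])
    also have "\<dots> = ennreal (norm_n n y / (2 * sqrt pi) / p)"
      using norm_n_nonneg[of n y] by (simp add: ennreal_mult'[symmetric])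
    finally show ?thesis .
  qed
  have V2: "V = ennreal (1 / q)"
  proof -
    have "V = V * (ennreal q * ennreal (1 / q))" using q by (simp add: ennreal_mult'[symmetric])
    also have "\<dots> = ennreal (1 / q)"
      using Veq unfolding q_def by (simp add: mult.assoc[symmetric])
    finally show ?thesis .
  qed
  have "G / V = ennreal (norm_n n y / (2 * sqrt pi) / p / (1 / q))"
    unfolding G2 V2 using q norm_n_nonneg[of n y] p by (subst divide_ennreal) auto
  also have "norm_n n y / (2 * sqrt pi) / p / (1 / q) = norm_n n y * Kc n"
  proof -
    have "norm_n n y / (2 * sqrt pi) / p / (1 / q) = norm_n n y / (2 * sqrt pi) * (q / p)"
      by simp
    also have "q / p = Mom (n - 1) / Mom n"
    proof -
      have cn: "c ^ n * real n \<noteq> 0" using c n by simp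
      show ?thesis unfolding p_def q_def by (rule mult_divide_mult_cancel_left[OF cn])
    qed
    finally show ?thesis unfolding Kc_def by simp
  qed
  finally show ?thesis using H_eq by simp
qed

lemma norm_proj: "norm_n n x > 0 \<Longrightarrow> norm_n n (proj n x) = 1"
proof -
  assume r: "norm_n n x > 0"
  have S: "(\<Sum>i<n. (x i)\<^sup>2) = (norm_n n x)\<^sup>2"
    unfolding norm_n_def by (simp add: sum_nonneg)
  have "(\<Sum>i<n. (proj n x i)\<^sup>2) = (\<Sum>i<n. (x i)\<^sup>2) / (norm_n n x)\<^sup>2"
    unfolding proj_def by (simp add: sum_divide_distrib power_divide)
  also have "\<dots> = 1" using r S by simp
  finally show ?thesis unfolding norm_n_def[of n "proj n x"] by simp
qed

lemma sph_sets[measurable_cong]: "sets (sph_measure n) = sets (LL n)"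
  unfolding sph_measure_alt by simp

lemma sph_space: "space (sph_measure n) = space (LL n)"
  unfolding sph_measure_alt by simp

lemma Bst_pos: assumes n: "n \<ge> 1" shows "emeasure (LL n) (Bst n) > 0"
proof -
  interpret product_sigma_finite "\<lambda>_::nat. (lborel::real measure)" by (rule psf_lborel)
  have sub: "PiE {..<n} (\<lambda>_. {0<..1 / real n}) \<subseteq> Bst n"
  proof
    fix x assume x: "x \<in> PiE {..<n} (\<lambda>_. {0<..1 / real n})"
    have xi: "0 < x i" "x i \<le> 1 / real n" if "i \<in> {..<n}" for i
      using x that by (auto simp: PiE_iff)
    have "(\<Sum>i<n. (x i)\<^sup>2) \<le> (\<Sum>i<n. (1 / real n)\<^sup>2)"
    proof (rule sum_mono)
      fix i assume i: "i \<in> {..<n}"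
      show "(x i)\<^sup>2 \<le> (1 / real n)\<^sup>2"
        by (rule power_mono[OF xi(2)[OF i]]) (use xi(1)[OF i] in linarith)
    qed
    also have "\<dots> = real n * (1 / real n)\<^sup>2" by simp
    also have "\<dots> = 1 / real n" using n by (simp add: power2_eq_square)
    also have "\<dots> \<le> 1" using n by simp
    finally have le1: "norm_n n x \<le> 1" unfolding norm_n_def by simp
    have x0: "0 \<in> {..<n}" using n by simp
    have "0 < (\<Sum>i<n. (x i)\<^sup>2)"
      by (rule sum_pos2[OF _ x0]) (use xi(1)[OF x0] in auto)
    then have gt0: "norm_n n x > 0" unfolding norm_n_def by simp
    have "x \<in> space (LL n)" using x by (simp add: space_PiM PiE_iff)
    then show "x \<in> Bst n" unfolding Bst_def using le1 gt0 by simp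
  qed
  have "emeasure (LL n) (PiE {..<n} (\<lambda>_. {0<..1 / real n})) = (\<Prod>i<n. emeasure lborel {0<..1 / real n})"
    by (subst emeasure_PiM) auto
  also have "\<dots> = (\<Prod>i<n. ennreal (1 / real n))"
    using n by (intro prod.cong refl) simp
  also have "\<dots> = ennreal (1 / real n) ^ n" by simp
  also have "\<dots> = ennreal ((1 / real n) ^ n)" by (simp add: ennreal_power)
  finally have "emeasure (LL n) (PiE {..<n} (\<lambda>_. {0<..1 / real n})) > 0" using n by simp
  also have "\<dots> \<le> emeasure (LL n) (Bst n)" using sub by (intro emeasure_mono) auto
  finally show ?thesis .
qed

lemma Bst_fin: "emeasure (LL n) (Bst n) < \<infinity>"
proof -
  have "emeasure (LL n) (Bst n) \<le> emeasure (LL n) {x\<in>space (LL n). norm_n n x \<le> 1}"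
    unfolding Bst_def by (intro emeasure_mono) auto
  also have "\<dots> \<le> 2 ^ n" by (rule ball_finite)
  also have "\<dots> < \<infinity>" by (simp add: power_less_top_ennreal)
  finally show ?thesis .
qed

lemma sph_prob: assumes n: "n \<ge> 1" shows "prob_space (sph_measure n)"
proof -
  interpret U: prob_space "uniform_measure (LL n) (Bst n)"
  proof (rule prob_space_uniform_measure)
    show "emeasure (LL n) (Bst n) \<noteq> 0" using Bst_pos[OF n] by simp
    show "emeasure (LL n) (Bst n) \<noteq> \<infinity>" using Bst_fin[of n] by simp
  qed
  show ?thesis unfolding sph_measure_alt
    by (rule U.prob_space_distr) (simp add: measurable_cong_sets[OF sets_uniform_measure refl])
qed

lemma sph_AE_norm: "AE u in sph_measure n. norm_n n u = 1"
proof -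
  have pm: "proj n \<in> measurable (uniform_measure (LL n) (Bst n)) (LL n)"
    using measurable_cong_sets[OF sets_uniform_measure refl] proj_meas by blast
  have "AE x in uniform_measure (LL n) (Bst n). norm_n n (proj n x) = 1"
    unfolding uniform_measure_def
  proof (subst AE_density)
    show "(\<lambda>x. indicator (Bst n) x / emeasure (LL n) (Bst n)) \<in> borel_measurable (LL n)" by measurable
    show "AE x in LL n. 0 < indicator (Bst n) x / emeasure (LL n) (Bst n) \<longrightarrow> norm_n n (proj n x) = 1"
    proof (intro AE_I2 impI)
      fix x assume "0 < indicator (Bst n) x / emeasure (LL n) (Bst n)"
      then have "x \<in> Bst n" by (cases "x \<in> Bst n") auto
      then show "norm_n n (proj n x) = 1" unfolding Bst_def using norm_proj by auto
    qed
  qed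
  then show ?thesis unfolding sph_measure_alt
    by (subst AE_distr_iff[OF pm]) auto
qed

lemma hyp_sets: "sets (hyp_intensity n \<gamma>) = sets (LL n \<Otimes>\<^sub>M lborel)"
  unfolding hyp_intensity_def by (simp add: sets_pair_measure_cong[OF sph_sets refl])

lemma hyp_space: "space (hyp_intensity n \<gamma>) = space (LL n) \<times> UNIV"
  unfolding hyp_intensity_def by (simp add: space_pair_measure sph_space)

lemma hyp_emeasure:
  assumes B: "B \<in> sets (LL n \<Otimes>\<^sub>M lborel)"
  shows "emeasure (hyp_intensity n \<gamma>) B =
    (\<integral>\<^sup>+u. \<integral>\<^sup>+\<tau>. ennreal (2 * \<gamma>) * indicator {0..} \<tau> * indicator B (u, \<tau>) \<partial>lborel \<partial>sph_measure n)"
proof -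
  have se: "sets (sph_measure n \<Otimes>\<^sub>M lborel) = sets (LL n \<Otimes>\<^sub>M lborel)"
    by (rule sets_pair_measure_cong[OF sph_sets refl])
  have B': "B \<in> sets (sph_measure n \<Otimes>\<^sub>M lborel)" using B se by simp
  have fm: "(\<lambda>p. ennreal (2 * \<gamma>) * indicator {0..} (snd p) * indicator B p) \<in> borel_measurable (sph_measure n \<Otimes>\<^sub>M lborel)"
    using B' by measurable
  have "emeasure (hyp_intensity n \<gamma>) B = (\<integral>\<^sup>+p. ennreal (2 * \<gamma>) * indicator {0..} (snd p) * indicator B p \<partial>(sph_measure n \<Otimes>\<^sub>M lborel))"
    unfolding hyp_intensity_def by (rule emeasure_density) (use B' in auto)
  also have "\<dots> = (\<integral>\<^sup>+u. \<integral>\<^sup>+\<tau>. ennreal (2 * \<gamma>) * indicator {0..} \<tau> * indicator B (u, \<tau>) \<partial>lborel \<partial>sph_measure n)"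
    using lborel.nn_integral_fst[OF fm] by simp
  finally show ?thesis .
qed

definition Aset :: "nat \<Rightarrow> ((nat \<Rightarrow> real) \<Rightarrow> real) \<Rightarrow> ((nat \<Rightarrow> real) \<times> real) set" where
  "Aset n a = {p \<in> space (LL n) \<times> UNIV. norm_n n (fst p) = 1 \<and> 0 \<le> snd p \<and> snd p < a (fst p)}"

definition Nset :: "nat \<Rightarrow> ((nat \<Rightarrow> real) \<times> real) set" where
  "Nset n = {p \<in> space (LL n) \<times> UNIV. \<not> (norm_n n (fst p) = 1 \<and> 0 \<le> snd p)}"

lemma Aset_sets:
  assumes [measurable]: "a \<in> borel_measurable (LL n)"
  shows "Aset n a \<in> sets (LL n \<Otimes>\<^sub>M lborel)"
proof -
  have "Aset n a = {p \<in> space (LL n \<Otimes>\<^sub>M lborel). norm_n n (fst p) = 1 \<and> 0 \<le> snd p \<and> snd p < a (fst p)}"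
    unfolding Aset_def by (simp add: space_pair_measure)
  also have "\<dots> \<in> sets (LL n \<Otimes>\<^sub>M lborel)" by measurable
  finally show ?thesis .
qed

lemma Nset_sets: "Nset n \<in> sets (LL n \<Otimes>\<^sub>M lborel)"
proof -
  have "Nset n = {p \<in> space (LL n \<Otimes>\<^sub>M lborel). \<not> (norm_n n (fst p) = 1 \<and> 0 \<le> snd p)}"
    unfolding Nset_def by (simp add: space_pair_measure)
  also have "\<dots> \<in> sets (LL n \<Otimes>\<^sub>M lborel)" by measurable
  finally show ?thesis .
qed

lemma Aset_emeasure:
  assumes am[measurable]: "a \<in> borel_measurable (LL n)"
  shows "emeasure (hyp_intensity n \<gamma>) (Aset n a) = ennreal (2 * \<gamma>) * (\<integral>\<^sup>+u. ennreal (a u) \<partial>sph_measure n)"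
proof -
  have "emeasure (hyp_intensity n \<gamma>) (Aset n a) =
    (\<integral>\<^sup>+u. \<integral>\<^sup>+\<tau>. ennreal (2 * \<gamma>) * indicator {0..} \<tau> * indicator (Aset n a) (u, \<tau>) \<partial>lborel \<partial>sph_measure n)"
    by (rule hyp_emeasure[OF Aset_sets[OF am]])
  also have "\<dots> = (\<integral>\<^sup>+u. ennreal (2 * \<gamma>) * ennreal (a u) \<partial>sph_measure n)"
  proof (rule nn_integral_cong_AE)
    show "AE u in sph_measure n. (\<integral>\<^sup>+\<tau>. ennreal (2 * \<gamma>) * indicator {0..} \<tau> * indicator (Aset n a) (u, \<tau>) \<partial>lborel) = ennreal (2 * \<gamma>) * ennreal (a u)"
      using sph_AE_norm[of n]
    proof (rule AE_mp[OF _ AE_space[THEN AE_mp]], intro AE_I2 impI)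
      fix u assume u: "u \<in> space (sph_measure n)" and nu: "norm_n n u = 1"
      have "(\<integral>\<^sup>+\<tau>. ennreal (2 * \<gamma>) * indicator {0..} \<tau> * indicator (Aset n a) (u, \<tau>) \<partial>lborel)
          = (\<integral>\<^sup>+\<tau>. ennreal (2 * \<gamma>) * indicator {0..<a u} \<tau> \<partial>lborel)"
        using u nu by (intro nn_integral_cong) (auto simp: Aset_def indicator_def sph_space)
      also have "\<dots> = ennreal (2 * \<gamma>) * emeasure lborel {0..<a u}"
        by (rule nn_integral_cmult_indicator) auto
      also have "emeasure lborel {0..<a u} = ennreal (a u)"
        by (cases "0 \<le> a u") (auto simp: ennreal_neg)
      finally show "(\<integral>\<^sup>+\<tau>. ennreal (2 * \<gamma>) * indicator {0..} \<tau> * indicator (Aset n a) (u, \<tau>) \<partial>lborel) = ennreal (2 * \<gamma>) * ennreal (a u)" .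
    qed
  qed
  also have "\<dots> = ennreal (2 * \<gamma>) * (\<integral>\<^sup>+u. ennreal (a u) \<partial>sph_measure n)"
    by (rule nn_integral_cmult) (simp add: measurable_cong_sets[OF sph_sets refl])
  finally show ?thesis .
qed

lemma Nset_emeasure: "emeasure (hyp_intensity n \<gamma>) (Nset n) = 0"
proof -
  have "emeasure (hyp_intensity n \<gamma>) (Nset n) =
    (\<integral>\<^sup>+u. \<integral>\<^sup>+\<tau>. ennreal (2 * \<gamma>) * indicator {0..} \<tau> * indicator (Nset n) (u, \<tau>) \<partial>lborel \<partial>sph_measure n)"
    by (rule hyp_emeasure[OF Nset_sets])
  also have "\<dots> = (\<integral>\<^sup>+u. 0 \<partial>sph_measure n)"
  proof (rule nn_integral_cong_AE)
    show "AE u in sph_measure n. (\<integral>\<^sup>+\<tau>. ennreal (2 * \<gamma>) * indicator {0..} \<tau> * indicator (Nset n) (u, \<tau>) \<partial>lborel) = 0"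
      using sph_AE_norm[of n]
    proof (rule AE_mp, intro AE_I2 impI)
      fix u assume nu: "norm_n n u = 1"
      have z: "\<And>\<tau>. ennreal (2 * \<gamma>) * indicator {0..} \<tau> * indicator (Nset n) (u, \<tau>) = (0::ennreal)"
        using nu by (auto simp: Nset_def indicator_def)
      show "(\<integral>\<^sup>+\<tau>. ennreal (2 * \<gamma>) * indicator {0..} \<tau> * indicator (Nset n) (u, \<tau>) \<partial>lborel) = 0"
        unfolding z by simp
    qed
  qed
  finally show ?thesis by simp
qed

lemma floor_eq_close:
  fixes a b e :: real
  assumes "\<lfloor>a / e\<rfloor> = \<lfloor>b / e\<rfloor>" "e > 0"
  shows "\<bar>a - b\<bar> \<le> e"
proof -
  have "\<bar>a / e - b / e\<bar> < 1"
    using assms(1) floor_correct[of "a / e"] floor_correct[of "b / e"] by (simp add: abs_less_iff) linarith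
  then have "\<bar>(a - b) / e\<bar> < 1" by (simp add: diff_divide_distrib)
  then have "\<bar>a - b\<bar> / e < 1" using assms(2) by (simp add: abs_divide)
  then show ?thesis using assms(2) by (simp add: divide_less_eq)
qed

lemma inner_diff_bound:
  assumes "\<And>i. i < n \<Longrightarrow> \<bar>y i - z i\<bar> \<le> e" "norm_n n u = 1"
  shows "\<bar>inner_n n y u - inner_n n z u\<bar> \<le> real n * e"
proof -
  have "\<bar>inner_n n y u - inner_n n z u\<bar> = \<bar>\<Sum>i<n. (y i - z i) * u i\<bar>"
    unfolding inner_n_def by (simp add: sum_subtractf left_diff_distrib)
  also have "\<dots> \<le> (\<Sum>i<n. \<bar>(y i - z i) * u i\<bar>)" by (rule sum_abs)
  also have "\<dots> \<le> (\<Sum>i<n. e)"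
  proof (rule sum_mono)
    fix i assume i: "i \<in> {..<n}"
    have "\<bar>u i\<bar> \<le> 1" using abs_le_norm_n[of i n u] i assms(2) by simp
    then have "\<bar>y i - z i\<bar> * \<bar>u i\<bar> \<le> e * 1"
      using assms(1)[of i] i by (intro mult_mono) auto
    then show "\<bar>(y i - z i) * u i\<bar> \<le> e" by (simp add: abs_mult)
  qed
  also have "\<dots> = real n * e" by simp
  finally show ?thesis .
qed

lemma ennreal_add_le: "0 \<le> e \<Longrightarrow> ennreal (a + e) \<le> ennreal a + ennreal e"
proof (cases "a \<ge> 0")
  case True
  assume "0 \<le> e" then show ?thesis using True by (simp add: ennreal_plus)
next
  case False
  assume e: "0 \<le> e"
  have "ennreal (a + e) \<le> ennreal e" using False by (intro ennreal_leI) simp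
  also have "\<dots> \<le> ennreal a + ennreal e" by simp
  finally show ?thesis .
qed

lemma theta_plus:
  assumes n: "n \<ge> 1" and g: "\<gamma> > 0" and eta: "\<eta> \<ge> 0"
  shows "emeasure (hyp_intensity n \<gamma>) (Aset n (\<lambda>u. inner_n n z u + \<eta>)) < \<infinity>"
    and "measure (hyp_intensity n \<gamma>) (Aset n (\<lambda>u. inner_n n z u + \<eta>)) \<le> 2 * \<gamma> * (norm_n n z * Kc n + \<eta>)"
proof -
  interpret S: prob_space "sph_measure n" by (rule sph_prob[OF n])
  have "(\<integral>\<^sup>+u. ennreal (inner_n n z u + \<eta>) \<partial>sph_measure n) \<le> (\<integral>\<^sup>+u. ennreal (inner_n n z u) + ennreal \<eta> \<partial>sph_measure n)"
    using eta by (intro nn_integral_mono ennreal_add_le)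
  also have "\<dots> = (\<integral>\<^sup>+u. ennreal (inner_n n z u) \<partial>sph_measure n) + (\<integral>\<^sup>+u. ennreal \<eta> \<partial>sph_measure n)"
    by (rule nn_integral_add) (auto simp: measurable_cong_sets[OF sph_sets refl])
  also have "\<dots> = ennreal (norm_n n z * Kc n) + ennreal \<eta>"
    using H_formula[OF n] S.emeasure_space_1 by simp
  also have "\<dots> = ennreal (norm_n n z * Kc n + \<eta>)"
    using eta norm_n_nonneg[of n z] Kc_pos[of n] by (simp add: ennreal_plus)
  finally have I: "(\<integral>\<^sup>+u. ennreal (inner_n n z u + \<eta>) \<partial>sph_measure n) \<le> ennreal (norm_n n z * Kc n + \<eta>)" .
  have E: "emeasure (hyp_intensity n \<gamma>) (Aset n (\<lambda>u. inner_n n z u + \<eta>)) = ennreal (2 * \<gamma>) * (\<integral>\<^sup>+u. ennreal (inner_n n z u + \<eta>) \<partial>sph_measure n)"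
    by (rule Aset_emeasure) measurable
  have le: "emeasure (hyp_intensity n \<gamma>) (Aset n (\<lambda>u. inner_n n z u + \<eta>)) \<le> ennreal (2 * \<gamma> * (norm_n n z * Kc n + \<eta>))"
  proof -
    have "ennreal (2 * \<gamma>) * (\<integral>\<^sup>+u. ennreal (inner_n n z u + \<eta>) \<partial>sph_measure n) \<le> ennreal (2 * \<gamma>) * ennreal (norm_n n z * Kc n + \<eta>)"
      by (rule mult_left_mono[OF I]) simp
    also have "\<dots> = ennreal (2 * \<gamma> * (norm_n n z * Kc n + \<eta>))" using g by (simp add: ennreal_mult')
    finally show ?thesis unfolding E .
  qed
  then show "emeasure (hyp_intensity n \<gamma>) (Aset n (\<lambda>u. inner_n n z u + \<eta>)) < \<infinity>"
    using le_less_trans by fastforce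
  show "measure (hyp_intensity n \<gamma>) (Aset n (\<lambda>u. inner_n n z u + \<eta>)) \<le> 2 * \<gamma> * (norm_n n z * Kc n + \<eta>)"
    unfolding measure_def using le g eta norm_n_nonneg[of n z] Kc_pos[of n]
    by (intro enn2real_leI) auto
qed

lemma theta_minus:
  assumes n: "n \<ge> 1" and g: "\<gamma> > 0" and eta: "\<eta> \<ge> 0"
  shows "emeasure (hyp_intensity n \<gamma>) (Aset n (\<lambda>u. inner_n n z u - \<eta>)) < \<infinity>"
    and "2 * \<gamma> * (norm_n n z * Kc n - \<eta>) \<le> measure (hyp_intensity n \<gamma>) (Aset n (\<lambda>u. inner_n n z u - \<eta>))"
proof -
  interpret S: prob_space "sph_measure n" by (rule sph_prob[OF n])
  define I where "I = (\<integral>\<^sup>+u. ennreal (inner_n n z u - \<eta>) \<partial>sph_measure n)"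
  have "I \<le> (\<integral>\<^sup>+u. ennreal (inner_n n z u) \<partial>sph_measure n)"
    unfolding I_def using eta by (intro nn_integral_mono) (simp add: ennreal_leI)
  also have "\<dots> = ennreal (norm_n n z * Kc n)" by (rule H_formula[OF n])
  finally have Ifin: "I < \<infinity>" using le_less_trans by fastforce
  then obtain m where m: "I = ennreal m" "m \<ge> 0" by (cases I) auto
  have "ennreal (norm_n n z * Kc n) = (\<integral>\<^sup>+u. ennreal (inner_n n z u) \<partial>sph_measure n)"
    by (rule H_formula[OF n, symmetric])
  also have "\<dots> \<le> (\<integral>\<^sup>+u. ennreal (inner_n n z u - \<eta>) + ennreal \<eta> \<partial>sph_measure n)"
    using eta ennreal_add_le[of \<eta> "inner_n n z _ - \<eta>"] by (intro nn_integral_mono) simp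
  also have "\<dots> = I + (\<integral>\<^sup>+u. ennreal \<eta> \<partial>sph_measure n)"
    unfolding I_def by (rule nn_integral_add) (auto simp: measurable_cong_sets[OF sph_sets refl])
  also have "\<dots> = ennreal (m + \<eta>)"
    using m eta S.emeasure_space_1 by (simp add: ennreal_plus)
  finally have le: "ennreal (norm_n n z * Kc n) \<le> ennreal (m + \<eta>)" .
  have "norm_n n z * Kc n \<le> m + \<eta>"
    using le ennreal_le_iff[of "m + \<eta>" "norm_n n z * Kc n"] m eta by auto
  have E: "emeasure (hyp_intensity n \<gamma>) (Aset n (\<lambda>u. inner_n n z u - \<eta>)) = ennreal (2 * \<gamma> * m)"
  proof -
    have "emeasure (hyp_intensity n \<gamma>) (Aset n (\<lambda>u. inner_n n z u - \<eta>)) = ennreal (2 * \<gamma>) * I"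
      unfolding I_def by (rule Aset_emeasure) measurable
    then show ?thesis using g m by (simp add: ennreal_mult')
  qed
  show "emeasure (hyp_intensity n \<gamma>) (Aset n (\<lambda>u. inner_n n z u - \<eta>)) < \<infinity>"
    unfolding E by simp
  have "measure (hyp_intensity n \<gamma>) (Aset n (\<lambda>u. inner_n n z u - \<eta>)) = 2 * \<gamma> * m"
    unfolding measure_def E using g m by simp
  then show "2 * \<gamma> * (norm_n n z * Kc n - \<eta>) \<le> measure (hyp_intensity n \<gamma>) (Aset n (\<lambda>u. inner_n n z u - \<eta>))"
    using \<open>norm_n n z * Kc n \<le> m + \<eta>\<close> g by (simp add: mult_left_mono)
qed

lemma void_lemma:
  assumes pp: "poisson_process M Xp (hyp_intensity n \<gamma>)"
    and A: "A \<in> sets (LL n \<Otimes>\<^sub>M lborel)" and fin: "emeasure (hyp_intensity n \<gamma>) A < \<infinity>"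
  shows "{\<omega> \<in> space M. Xp \<omega> \<inter> A = {}} \<in> sets M"
    and "measure M {\<omega> \<in> space M. Xp \<omega> \<inter> A = {}} = exp (- measure (hyp_intensity n \<gamma>) A)"
proof -
  have eq: "{\<omega> \<in> space M. finite (Xp \<omega> \<inter> A) \<and> card (Xp \<omega> \<inter> A) = 0} = {\<omega> \<in> space M. Xp \<omega> \<inter> A = {}}"
    by auto
  have A': "A \<in> sets (hyp_intensity n \<gamma>)" using A by (simp add: hyp_sets)
  from pp A' fin have
    "{\<omega> \<in> space M. finite (Xp \<omega> \<inter> A) \<and> card (Xp \<omega> \<inter> A) = 0} \<in> sets M \<and>
     measure M {\<omega> \<in> space M. finite (Xp \<omega> \<inter> A) \<and> card (Xp \<omega> \<inter> A) = 0}
       = exp (- measure (hyp_intensity n \<gamma>) A) * (measure (hyp_intensity n \<gamma>) A) ^ 0 / fact 0"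
    unfolding poisson_process_def by blast
  then show "{\<omega> \<in> space M. Xp \<omega> \<inter> A = {}} \<in> sets M"
    and "measure M {\<omega> \<in> space M. Xp \<omega> \<inter> A = {}} = exp (- measure (hyp_intensity n \<gamma>) A)"
    unfolding eq by simp_all
qed

lemma indep_lemma:
  assumes pp: "poisson_process M Xp (hyp_intensity n \<gamma>)"
    and ind: "indep_of_process M Xp (hyp_intensity n \<gamma>) Yp (lebesgue_n n)"
    and C: "C \<in> sets (LL n)" and A: "A \<in> sets (LL n \<Otimes>\<^sub>M lborel)"
  shows "measure M ({\<omega> \<in> space M. Yp \<omega> \<in> C} \<inter> {\<omega> \<in> space M. Xp \<omega> \<inter> A = {}})
       = measure M {\<omega> \<in> space M. Yp \<omega> \<in> C} * measure M {\<omega> \<in> space M. Xp \<omega> \<inter> A = {}}"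
proof -
  interpret prob_space M using pp unfolding poisson_process_def by simp
  have eq: "{\<omega> \<in> space M. finite (Xp \<omega> \<inter> A) \<and> card (Xp \<omega> \<inter> A) = 0} = {\<omega> \<in> space M. Xp \<omega> \<inter> A = {}}"
    by auto
  have A': "A \<in> sets (hyp_intensity n \<gamma>)" using A by (simp add: hyp_sets)
  have a: "{\<omega> \<in> space M. Yp \<omega> \<in> C} \<in> sigma_sets (space M) {Yp -` B \<inter> space M | B. B \<in> sets (lebesgue_n n)}"
  proof (rule sigma_sets.Basic)
    have "{\<omega> \<in> space M. Yp \<omega> \<in> C} = Yp -` C \<inter> space M" by auto
    then show "{\<omega> \<in> space M. Yp \<omega> \<in> C} \<in> {Yp -` B \<inter> space M | B. B \<in> sets (lebesgue_n n)}"
      using C by (auto simp: lebesgue_n_LL)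
  qed
  have b: "{\<omega> \<in> space M. Xp \<omega> \<inter> A = {}} \<in> sigma_sets (space M) (process_events M Xp (hyp_intensity n \<gamma>))"
  proof (rule sigma_sets.Basic)
    show "{\<omega> \<in> space M. Xp \<omega> \<inter> A = {}} \<in> process_events M Xp (hyp_intensity n \<gamma>)"
      unfolding process_events_def eq[symmetric] using A' by blast
  qed
  show ?thesis
    using indep_setD[OF ind[unfolded indep_of_process_def] a b] .
qed

lemma sphere_lemma:
  assumes n: "n \<ge> 1" and d: "\<delta> > 0" and pM: "prob_space M"
    and Ym: "Yp \<in> measurable M (lebesgue_n n)"
    and Yd: "distr M (lebesgue_n n) Yp = unif_sphere n \<delta>"
  shows "measure M {\<omega> \<in> space M. Yp \<omega> \<in> {y \<in> space (LL n). norm_n n y = \<delta>}} = 1"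
proof -
  interpret S: prob_space "sph_measure n" by (rule sph_prob[OF n])
  define Sd where "Sd = {y \<in> space (LL n). norm_n n y = \<delta>}"
  have Sd: "Sd \<in> sets (LL n)" unfolding Sd_def by measurable
  have sc: "(\<lambda>u. restrict (\<lambda>i. \<delta> * u i) {..<n}) \<in> measurable (sph_measure n) (LL n)"
    using measurable_cong_sets[OF sph_sets refl] measurable_scale_PiM by blast
  have "measure M {\<omega> \<in> space M. Yp \<omega> \<in> Sd} = measure M (Yp -` Sd \<inter> space M)"
    by (intro arg_cong[where f="measure M"]) auto
  also have "\<dots> = measure (distr M (lebesgue_n n) Yp) Sd"
    by (rule measure_distr[symmetric, OF Ym]) (use Sd in \<open>simp add: lebesgue_n_LL\<close>)
  also have "\<dots> = measure (unif_sphere n \<delta>) Sd" using Yd by simp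
  also have "\<dots> = measure (sph_measure n) ((\<lambda>u. restrict (\<lambda>i. \<delta> * u i) {..<n}) -` Sd \<inter> space (sph_measure n))"
    unfolding unif_sphere_def lebesgue_n_LL by (rule measure_distr[OF sc Sd])
  also have "(\<lambda>u. restrict (\<lambda>i. \<delta> * u i) {..<n}) -` Sd \<inter> space (sph_measure n) = {u \<in> space (sph_measure n). norm_n n u = 1}"
    unfolding Sd_def using d norm_n_scale[of \<delta> n] by (auto simp: space_PiM)
  also have "measure (sph_measure n) {u \<in> space (sph_measure n). norm_n n u = 1} = 1"
  proof (subst S.prob_Collect_eq_1)
    show "{u \<in> space (sph_measure n). norm_n n u = 1} \<in> sets (sph_measure n)"
      unfolding sph_space sph_sets by measurable
    show "AE u in sph_measure n. norm_n n u = 1" by (rule sph_AE_norm)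
  qed
  finally show ?thesis unfolding Sd_def .
qed

lemma per_n_bounds:
  fixes M :: "'w measure" and Xp :: "'w \<Rightarrow> ((nat \<Rightarrow> real) \<times> real) set" and Yp :: "'w \<Rightarrow> nat \<Rightarrow> real"
  assumes n: "n \<ge> 1" and d: "\<delta> > 0" and g: "\<gamma> > 0" and e: "\<epsilon> > 0"
    and pp: "poisson_process M Xp (hyp_intensity n \<gamma>)"
    and Ym: "Yp \<in> measurable M (lebesgue_n n)"
    and Yd: "distr M (lebesgue_n n) Yp = unif_sphere n \<delta>"
    and ind: "indep_of_process M Xp (hyp_intensity n \<gamma>) Yp (lebesgue_n n)"
    and Em: "{\<omega> \<in> space M. Yp \<omega> \<in> zero_cell n (Xp \<omega>)} \<in> sets M"
  shows "exp (- (2 * \<gamma> * (\<delta> * Kc n + real n * \<epsilon>))) \<le> measure M {\<omega> \<in> space M. Yp \<omega> \<in> zero_cell n (Xp \<omega>)}"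
    and "measure M {\<omega> \<in> space M. Yp \<omega> \<in> zero_cell n (Xp \<omega>)} \<le> exp (- (2 * \<gamma> * (\<delta> * Kc n - real n * \<epsilon>)))"
proof -
  have pM: "prob_space M" using pp unfolding poisson_process_def by simp
  interpret prob_space M by (rule pM)
  have X\<Theta>: "\<And>\<omega>. \<omega> \<in> space M \<Longrightarrow> Xp \<omega> \<subseteq> space (LL n) \<times> UNIV"
    using pp unfolding poisson_process_def hyp_space by blast
  have Ym': "Yp \<in> measurable M (LL n)" using Ym by (simp add: lebesgue_n_LL)
  define E where "E = {\<omega> \<in> space M. Yp \<omega> \<in> zero_cell n (Xp \<omega>)}"
  define Nn :: int where "Nn = \<lceil>\<delta> / \<epsilon>\<rceil>"
  define Ks where "Ks = PiE {..<n} (\<lambda>_. {-Nn..Nn})"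
  define C where "C k = {y \<in> space (LL n). \<forall>i\<in>{..<n}. \<lfloor>y i / \<epsilon>\<rfloor> = k i}" for k :: "nat \<Rightarrow> int"
  define S where "S = {y \<in> space (LL n). norm_n n y = \<delta>}"
  define Kg where "Kg = {k \<in> Ks. C k \<inter> S \<noteq> {}}"
  define z where "z k = (SOME y. y \<in> C k \<inter> S)" for k
  define \<eta> where "\<eta> = real n * \<epsilon>"
  define Yi where "Yi B = {\<omega> \<in> space M. Yp \<omega> \<in> B}" for B
  define Vo where "Vo A = {\<omega> \<in> space M. Xp \<omega> \<inter> A = {}}" for A
  define Ap where "Ap k = Aset n (\<lambda>u. inner_n n (z k) u + \<eta>)" for k
  define Am where "Am k = Aset n (\<lambda>u. inner_n n (z k) u - \<eta>)" for k
  define \<Theta> where "\<Theta> = hyp_intensity n \<gamma>"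
  have eta: "\<eta> \<ge> 0" unfolding \<eta>_def using e by simp
  have finKg: "finite Kg"
    by (rule finite_subset[of _ Ks]) (auto simp: Kg_def Ks_def intro!: finite_PiE)
  have Csets: "C k \<in> sets (LL n)" for k unfolding C_def by measurable
  have Ssets: "S \<in> sets (LL n)" unfolding S_def by measurable
  have Yisets: "Yi B \<in> sets M" if "B \<in> sets (LL n)" for B
  proof -
    have "Yi B = Yp -` B \<inter> space M" unfolding Yi_def by auto
    then show ?thesis using measurable_sets[OF Ym' that] by simp
  qed
  have zk: "z k \<in> C k \<and> z k \<in> S" if "k \<in> Kg" for k
  proof -
    have "\<exists>y. y \<in> C k \<inter> S" using that unfolding Kg_def by auto
    then have "z k \<in> C k \<inter> S" unfolding z_def by (rule someI_ex)
    then show ?thesis by simp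
  qed
  have close: "\<bar>y i - y' i\<bar> \<le> \<epsilon>" if "y \<in> C k" "y' \<in> C k" "i < n" for y y' k i
    using that by (intro floor_eq_close[OF _ e]) (auto simp: C_def)
  have disj: "disjoint_family_on C Ks"
    unfolding disjoint_family_on_def
  proof (intro ballI impI)
    fix k k' assume kk: "k \<in> Ks" "k' \<in> Ks" "k \<noteq> k'"
    then obtain i where i: "i < n" "k i \<noteq> k' i"
      unfolding Ks_def by (metis PiE_ext lessThan_iff)
    show "C k \<inter> C k' = {}"
      using i unfolding C_def by auto
  qed
  have disjG: "disjoint_family_on C Kg"
    by (rule disjoint_family_on_mono[OF _ disj]) (auto simp: Kg_def)
  have cover: "S \<subseteq> (\<Union>k\<in>Kg. C k)"
  proof
    fix y assume y: "y \<in> S"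
    define k where "k = restrict (\<lambda>i. \<lfloor>y i / \<epsilon>\<rfloor>) {..<n}"
    have bd: "-Nn \<le> \<lfloor>y i / \<epsilon>\<rfloor> \<and> \<lfloor>y i / \<epsilon>\<rfloor> \<le> Nn" if "i < n" for i
    proof -
      have "\<bar>y i\<bar> \<le> \<delta>" using abs_le_norm_n[OF that, of y] y unfolding S_def by simp
      then have a: "-\<delta> \<le> y i" "y i \<le> \<delta>" by auto
      have "(-\<delta>) / \<epsilon> \<le> y i / \<epsilon>" by (rule divide_right_mono) (use a e in auto)
      then have "- (\<delta> / \<epsilon>) \<le> y i / \<epsilon>" by simp
      moreover have "y i / \<epsilon> \<le> \<delta> / \<epsilon>" by (rule divide_right_mono) (use a e in auto)
      ultimately have "- (\<delta> / \<epsilon>) \<le> y i / \<epsilon>" "y i / \<epsilon> \<le> \<delta> / \<epsilon>" by auto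
      moreover have "\<delta> / \<epsilon> \<le> of_int Nn" unfolding Nn_def by (rule le_of_int_ceiling)
      ultimately have l1: "of_int (-Nn) \<le> y i / \<epsilon>" and l2: "y i / \<epsilon> \<le> of_int Nn" by auto
      have "\<lfloor>y i / \<epsilon>\<rfloor> \<le> \<lfloor>of_int Nn :: real\<rfloor>" by (rule floor_mono[OF l2])
      then have "\<lfloor>y i / \<epsilon>\<rfloor> \<le> Nn" by simp
      moreover have "-Nn \<le> \<lfloor>y i / \<epsilon>\<rfloor>" using l1 by (simp add: le_floor_iff)
      ultimately show ?thesis by simp
    qed
    have "k \<in> Ks" unfolding Ks_def k_def using bd by auto
    moreover have "y \<in> C k" using y bd unfolding C_def S_def k_def by auto
    ultimately have "k \<in> Kg" unfolding Kg_def using y by auto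
    then show "y \<in> (\<Union>k\<in>Kg. C k)" using \<open>y \<in> C k\<close> by auto
  qed
  have Nsets: "Nset n \<in> sets (LL n \<Otimes>\<^sub>M lborel)" by (rule Nset_sets)
  have Apsets: "Ap k \<in> sets (LL n \<Otimes>\<^sub>M lborel)" for k unfolding Ap_def by (rule Aset_sets) measurable
  have Amsets: "Am k \<in> sets (LL n \<Otimes>\<^sub>M lborel)" for k unfolding Am_def by (rule Aset_sets) measurable
  have N0: "emeasure \<Theta> (Nset n) = 0" unfolding \<Theta>_def by (rule Nset_emeasure)
  have Nsets': "Nset n \<in> sets \<Theta>" using Nsets by (simp add: \<Theta>_def hyp_sets)
  have PL: "prob (Yi (C k) \<inter> Vo (Ap k \<union> Nset n)) \<ge> prob (Yi (C k)) * exp (- (2 * \<gamma> * (\<delta> * Kc n + \<eta>)))"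
    and VLs: "Vo (Ap k \<union> Nset n) \<in> sets M" if k: "k \<in> Kg" for k
  proof -
    have nz: "norm_n n (z k) = \<delta>" using zk[OF k] unfolding S_def by simp
    have f1: "emeasure \<Theta> (Ap k) < \<infinity>" unfolding \<Theta>_def Ap_def by (rule theta_plus(1)[OF n g eta])
    have m1: "measure \<Theta> (Ap k) \<le> 2 * \<gamma> * (\<delta> * Kc n + \<eta>)"
      using theta_plus(2)[OF n g eta, of "z k"] nz unfolding \<Theta>_def Ap_def by simp
    have Apsets': "Ap k \<in> sets \<Theta>" using Apsets by (simp add: \<Theta>_def hyp_sets)
    have "emeasure \<Theta> (Ap k \<union> Nset n) \<le> emeasure \<Theta> (Ap k) + emeasure \<Theta> (Nset n)"
      by (rule emeasure_subadditive[OF Apsets' Nsets'])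
    then have f2: "emeasure \<Theta> (Ap k \<union> Nset n) < \<infinity>" using f1 N0 by (simp add: le_less_trans)
    have "measure \<Theta> (Ap k \<union> Nset n) \<le> measure \<Theta> (Ap k) + measure \<Theta> (Nset n)"
      by (rule measure_Un_le[OF Apsets' Nsets'])
    then have m2: "measure \<Theta> (Ap k \<union> Nset n) \<le> 2 * \<gamma> * (\<delta> * Kc n + \<eta>)"
      using m1 N0 by (simp add: measure_def)
    have U: "Ap k \<union> Nset n \<in> sets (LL n \<Otimes>\<^sub>M lborel)" using Apsets Nsets by auto
    show "Vo (Ap k \<union> Nset n) \<in> sets M"
      unfolding Vo_def by (rule void_lemma(1)[OF pp U f2[unfolded \<Theta>_def]])
    have "prob (Yi (C k) \<inter> Vo (Ap k \<union> Nset n)) = prob (Yi (C k)) * exp (- measure \<Theta> (Ap k \<union> Nset n))"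
      unfolding Yi_def Vo_def \<Theta>_def
      using indep_lemma[OF pp ind Csets U] void_lemma(2)[OF pp U f2[unfolded \<Theta>_def]] by simp
    also have "\<dots> \<ge> prob (Yi (C k)) * exp (- (2 * \<gamma> * (\<delta> * Kc n + \<eta>)))"
      using m2 by (intro mult_left_mono) auto
    finally show "prob (Yi (C k) \<inter> Vo (Ap k \<union> Nset n)) \<ge> prob (Yi (C k)) * exp (- (2 * \<gamma> * (\<delta> * Kc n + \<eta>)))" .
  qed
  have PU: "prob (Yi (C k) \<inter> Vo (Am k)) \<le> prob (Yi (C k)) * exp (- (2 * \<gamma> * (\<delta> * Kc n - \<eta>)))"
    and VUs: "Vo (Am k) \<in> sets M" if k: "k \<in> Kg" for k
  proof -
    have nz: "norm_n n (z k) = \<delta>" using zk[OF k] unfolding S_def by simp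
    have f1: "emeasure \<Theta> (Am k) < \<infinity>" unfolding \<Theta>_def Am_def by (rule theta_minus(1)[OF n g eta])
    have m1: "2 * \<gamma> * (\<delta> * Kc n - \<eta>) \<le> measure \<Theta> (Am k)"
      using theta_minus(2)[OF n g eta, of "z k"] nz unfolding \<Theta>_def Am_def by simp
    show "Vo (Am k) \<in> sets M"
      unfolding Vo_def by (rule void_lemma(1)[OF pp Amsets f1[unfolded \<Theta>_def]])
    have "prob (Yi (C k) \<inter> Vo (Am k)) = prob (Yi (C k)) * exp (- measure \<Theta> (Am k))"
      unfolding Yi_def Vo_def \<Theta>_def
      using indep_lemma[OF pp ind Csets Amsets] void_lemma(2)[OF pp Amsets f1[unfolded \<Theta>_def]] by simp
    also have "\<dots> \<le> prob (Yi (C k)) * exp (- (2 * \<gamma> * (\<delta> * Kc n - \<eta>)))"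
      using m1 by (intro mult_left_mono) auto
    finally show "prob (Yi (C k) \<inter> Vo (Am k)) \<le> prob (Yi (C k)) * exp (- (2 * \<gamma> * (\<delta> * Kc n - \<eta>)))" .
  qed
  have PS: "prob (Yi S) = 1"
    unfolding Yi_def S_def by (rule sphere_lemma[OF n d pM Ym Yd])
  have disjY: "disjoint_family_on (\<lambda>k. Yi (C k)) Kg"
    using disjG unfolding disjoint_family_on_def Yi_def by auto
  have sumY: "prob (\<Union>k\<in>Kg. Yi (C k)) = (\<Sum>k\<in>Kg. prob (Yi (C k)))"
    by (rule finite_measure_finite_Union[OF finKg _ disjY]) (auto intro: Yisets Csets)
  have "Yi S \<subseteq> (\<Union>k\<in>Kg. Yi (C k))" using cover unfolding Yi_def by auto
  then have "prob (Yi S) \<le> prob (\<Union>k\<in>Kg. Yi (C k))"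
    by (intro finite_measure_mono) (auto intro!: sets.finite_UN finKg Yisets Csets)
  then have sum1: "(\<Sum>k\<in>Kg. prob (Yi (C k))) = 1"
    using PS sumY prob_le_1[of "\<Union>k\<in>Kg. Yi (C k)"] by simp
  have Esets: "E \<in> sets M" unfolding E_def by (rule Em)
  have incL: "Yi (C k) \<inter> Vo (Ap k \<union> Nset n) \<subseteq> E" if k: "k \<in> Kg" for k
  proof
    fix \<omega> assume \<omega>: "\<omega> \<in> Yi (C k) \<inter> Vo (Ap k \<union> Nset n)"
    then have sp: "\<omega> \<in> space M" and yc: "Yp \<omega> \<in> C k" and emp: "Xp \<omega> \<inter> (Ap k \<union> Nset n) = {}"
      unfolding Yi_def Vo_def by auto
    have ysp: "Yp \<omega> \<in> space (lebesgue_n n)" using yc unfolding C_def lebesgue_n_LL by auto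
    have "inner_n n (Yp \<omega>) u \<le> \<tau>" if ut: "(u, \<tau>) \<in> Xp \<omega>" for u \<tau>
    proof -
      have usp: "u \<in> space (LL n)" using X\<Theta>[OF sp] ut by auto
      have "(u, \<tau>) \<notin> Nset n" using emp ut by auto
      then have nu: "norm_n n u = 1" and t0: "0 \<le> \<tau>" using usp unfolding Nset_def by auto
      have "(u, \<tau>) \<notin> Ap k" using emp ut by auto
      then have "\<not> \<tau> < inner_n n (z k) u + \<eta>" using usp nu t0 unfolding Ap_def Aset_def by auto
      moreover have "\<bar>inner_n n (Yp \<omega>) u - inner_n n (z k) u\<bar> \<le> real n * \<epsilon>"
        by (rule inner_diff_bound[OF _ nu]) (rule close[OF yc conjunct1[OF zk[OF k]]])
      ultimately show ?thesis unfolding \<eta>_def by linarith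
    qed
    then show "\<omega> \<in> E" unfolding E_def zero_cell_def using sp ysp by auto
  qed
  have "prob (\<Union>k\<in>Kg. Yi (C k) \<inter> Vo (Ap k \<union> Nset n)) = (\<Sum>k\<in>Kg. prob (Yi (C k) \<inter> Vo (Ap k \<union> Nset n)))"
  proof (rule finite_measure_finite_Union[OF finKg])
    show "(\<lambda>k. Yi (C k) \<inter> Vo (Ap k \<union> Nset n)) ` Kg \<subseteq> sets M"
      using VLs Yisets Csets by auto
    show "disjoint_family_on (\<lambda>k. Yi (C k) \<inter> Vo (Ap k \<union> Nset n)) Kg"
      using disjY unfolding disjoint_family_on_def by auto
  qed
  also have "\<dots> \<ge> (\<Sum>k\<in>Kg. prob (Yi (C k)) * exp (- (2 * \<gamma> * (\<delta> * Kc n + \<eta>))))"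
    by (intro sum_mono PL)
  finally have "prob (\<Union>k\<in>Kg. Yi (C k) \<inter> Vo (Ap k \<union> Nset n)) \<ge> exp (- (2 * \<gamma> * (\<delta> * Kc n + \<eta>)))"
    using sum1 by (simp add: sum_distrib_right[symmetric])
  moreover have "prob (\<Union>k\<in>Kg. Yi (C k) \<inter> Vo (Ap k \<union> Nset n)) \<le> prob E"
    using incL by (intro finite_measure_mono Esets) auto
  ultimately show "exp (- (2 * \<gamma> * (\<delta> * Kc n + real n * \<epsilon>))) \<le> measure M {\<omega> \<in> space M. Yp \<omega> \<in> zero_cell n (Xp \<omega>)}"
    unfolding E_def \<eta>_def by linarith
  have incU: "E \<subseteq> (space M - Yi S) \<union> (\<Union>k\<in>Kg. Yi (C k) \<inter> Vo (Am k))"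
  proof
    fix \<omega> assume \<omega>E: "\<omega> \<in> E"
    then have sp: "\<omega> \<in> space M" and zc: "Yp \<omega> \<in> zero_cell n (Xp \<omega>)" unfolding E_def by auto
    show "\<omega> \<in> (space M - Yi S) \<union> (\<Union>k\<in>Kg. Yi (C k) \<inter> Vo (Am k))"
    proof (cases "Yp \<omega> \<in> S")
      case False then show ?thesis using sp unfolding Yi_def by auto
    next
      case True
      then obtain k where k: "k \<in> Kg" and yc: "Yp \<omega> \<in> C k" using cover by auto
      have "Xp \<omega> \<inter> Am k = {}"
      proof (rule ccontr)
        assume "Xp \<omega> \<inter> Am k \<noteq> {}"
        then obtain u \<tau> where ut: "(u, \<tau>) \<in> Xp \<omega>" "(u, \<tau>) \<in> Am k" by auto
        then have nu: "norm_n n u = 1" and lt: "\<tau> < inner_n n (z k) u - \<eta>"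
          unfolding Am_def Aset_def by auto
        have le: "inner_n n (Yp \<omega>) u \<le> \<tau>" using zc ut unfolding zero_cell_def by auto
        have "\<bar>inner_n n (Yp \<omega>) u - inner_n n (z k) u\<bar> \<le> real n * \<epsilon>"
          by (rule inner_diff_bound[OF _ nu]) (rule close[OF yc conjunct1[OF zk[OF k]]])
        then show False using lt le unfolding \<eta>_def by linarith
      qed
      then show ?thesis using k yc sp unfolding Yi_def Vo_def by auto
    qed
  qed
  have Us: "(\<Union>k\<in>Kg. Yi (C k) \<inter> Vo (Am k)) \<in> events"
  proof (rule sets.finite_UN[OF finKg])
    fix k assume "k \<in> Kg"
    then show "Yi (C k) \<inter> Vo (Am k) \<in> events" using VUs Yisets[OF Csets] by auto
  qed
  have Cs: "space M - Yi S \<in> events" using Yisets[OF Ssets] by auto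
  have "prob E \<le> prob ((space M - Yi S) \<union> (\<Union>k\<in>Kg. Yi (C k) \<inter> Vo (Am k)))"
    using Us Cs by (intro finite_measure_mono[OF incU]) auto
  also have "\<dots> \<le> prob (space M - Yi S) + prob (\<Union>k\<in>Kg. Yi (C k) \<inter> Vo (Am k))"
    using Us Cs by (intro measure_Un_le) auto
  also have "prob (space M - Yi S) = 0"
    using prob_compl[OF Yisets[OF Ssets]] PS by simp
  also have "prob (\<Union>k\<in>Kg. Yi (C k) \<inter> Vo (Am k)) \<le> (\<Sum>k\<in>Kg. prob (Yi (C k) \<inter> Vo (Am k)))"
    using VUs Yisets Csets by (intro finite_measure_subadditive_finite[OF finKg]) auto
  also have "\<dots> \<le> (\<Sum>k\<in>Kg. prob (Yi (C k)) * exp (- (2 * \<gamma> * (\<delta> * Kc n - \<eta>))))"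
    by (intro sum_mono PU)
  also have "\<dots> = exp (- (2 * \<gamma> * (\<delta> * Kc n - \<eta>)))"
    using sum1 by (simp add: sum_distrib_right[symmetric])
  finally show "measure M {\<omega> \<in> space M. Yp \<omega> \<in> zero_cell n (Xp \<omega>)} \<le> exp (- (2 * \<gamma> * (\<delta> * Kc n - real n * \<epsilon>)))"
    unfolding E_def \<eta>_def by simp
qed

lemma per_n_exact:
  fixes M :: "'w measure" and Xp :: "'w \<Rightarrow> ((nat \<Rightarrow> real) \<times> real) set" and Yp :: "'w \<Rightarrow> nat \<Rightarrow> real"
  assumes n: "n \<ge> 1" and d: "\<delta> > 0" and g: "\<gamma> > 0"
    and pp: "poisson_process M Xp (hyp_intensity n \<gamma>)"
    and Ym: "Yp \<in> measurable M (lebesgue_n n)"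
    and Yd: "distr M (lebesgue_n n) Yp = unif_sphere n \<delta>"
    and ind: "indep_of_process M Xp (hyp_intensity n \<gamma>) Yp (lebesgue_n n)"
    and Em: "{\<omega> \<in> space M. Yp \<omega> \<in> zero_cell n (Xp \<omega>)} \<in> sets M"
  shows "measure M {\<omega> \<in> space M. Yp \<omega> \<in> zero_cell n (Xp \<omega>)} = exp (- (2 * \<gamma> * (\<delta> * Kc n)))"
proof -
  define P where "P = measure M {\<omega> \<in> space M. Yp \<omega> \<in> zero_cell n (Xp \<omega>)}"
  have epos: "eventually (\<lambda>\<epsilon>::real. \<epsilon> > 0) (at_right 0)"
    by (simp add: eventually_at_right_less)
  have lim1: "((\<lambda>\<epsilon>. exp (- (2 * \<gamma> * (\<delta> * Kc n + real n * \<epsilon>)))) \<longlongrightarrow> exp (- (2 * \<gamma> * (\<delta> * Kc n + real n * 0)))) (at_right 0)"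
    by (intro tendsto_intros)
  have lim2: "((\<lambda>\<epsilon>. exp (- (2 * \<gamma> * (\<delta> * Kc n - real n * \<epsilon>)))) \<longlongrightarrow> exp (- (2 * \<gamma> * (\<delta> * Kc n - real n * 0)))) (at_right 0)"
    by (intro tendsto_intros)
  have "exp (- (2 * \<gamma> * (\<delta> * Kc n + real n * 0))) \<le> P"
  proof (rule tendsto_le[OF trivial_limit_at_right_real tendsto_const lim1])
    show "eventually (\<lambda>\<epsilon>. exp (- (2 * \<gamma> * (\<delta> * Kc n + real n * \<epsilon>))) \<le> P) (at_right 0)"
      using epos by eventually_elim (use per_n_bounds(1)[OF n d g _ pp Ym Yd ind Em] in \<open>simp add: P_def\<close>)
  qed
  moreover have "P \<le> exp (- (2 * \<gamma> * (\<delta> * Kc n - real n * 0)))"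
  proof (rule tendsto_le[OF trivial_limit_at_right_real lim2 tendsto_const])
    show "eventually (\<lambda>\<epsilon>. P \<le> exp (- (2 * \<gamma> * (\<delta> * Kc n - real n * \<epsilon>)))) (at_right 0)"
      using epos by eventually_elim (use per_n_bounds(2)[OF n d g _ pp Ym Yd ind Em] in \<open>simp add: P_def\<close>)
  qed
  ultimately show ?thesis unfolding P_def by simp
qed

lemma final_limits:
  fixes t :: "nat \<Rightarrow> real" and \<gamma> :: "nat \<Rightarrow> real" and \<rho> \<alpha> \<delta> :: real
  assumes d: "\<delta> > 0" and r: "\<rho> > 0"
    and asy: "\<gamma> \<sim>[sequentially] (\<lambda>n. \<rho> * real n powr \<alpha>)"
    and t: "\<And>n. n \<ge> 1 \<Longrightarrow> p n = exp (- (2 * \<gamma> n * (\<delta> * Kc n)))"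
  shows "(\<alpha> > 1/2 \<longrightarrow> p \<longlonglongrightarrow> 0)
       \<and> (\<alpha> = 1/2 \<longrightarrow> p \<longlonglongrightarrow> exp (- sqrt (2 / pi) * \<rho> * \<delta>))
       \<and> (\<alpha> < 1/2 \<longrightarrow> p \<longlonglongrightarrow> 1)"
proof -
  define R where "R n = \<gamma> n / (\<rho> * real n powr \<alpha>)" for n
  define Q where "Q n = sqrt (real n) * Kc n" for n
  define c where "c = 2 * \<delta> * \<rho>"
  have c: "c > 0" unfolding c_def using d r by simp
  have Rlim: "R \<longlonglongrightarrow> 1"
    unfolding R_def
  proof (rule asymp_equivD_strong[OF asy])
    show "eventually (\<lambda>n. \<gamma> n \<noteq> 0 \<or> \<rho> * real n powr \<alpha> \<noteq> 0) sequentially"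
      using eventually_ge_at_top[of "1::nat"] by eventually_elim (use r in simp)
  qed
  have Qlim: "Q \<longlonglongrightarrow> 1 / sqrt (2 * pi)" unfolding Q_def by (rule Kc_asymp)
  have RQ: "(\<lambda>n. c * R n * Q n) \<longlonglongrightarrow> c * 1 * (1 / sqrt (2 * pi))"
    by (intro tendsto_intros Rlim Qlim)
  have texp: "eventually (\<lambda>n. p n = exp (- (c * R n * Q n * real n powr (\<alpha> - 1/2)))) sequentially"
    using eventually_ge_at_top[of "1::nat"]
  proof eventually_elim
    case (elim n)
    have np: "real n > 0" using elim by simp
    have "sqrt (real n) * real n powr (\<alpha> - 1/2) = real n powr (1/2) * real n powr (\<alpha> - 1/2)"
      using np by (simp add: powr_half_sqrt)
    also have "\<dots> = real n powr (1/2 + (\<alpha> - 1/2))" by (rule powr_add[symmetric])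
    finally have "real n powr \<alpha> = sqrt (real n) * real n powr (\<alpha> - 1/2)" by simp
    then have "2 * \<gamma> n * (\<delta> * Kc n) = c * R n * Q n * real n powr (\<alpha> - 1/2)"
      unfolding c_def R_def Q_def using np r by (simp add: field_simps)
    then show ?case using t[OF elim] by simp
  qed
  have nat_top: "filterlim (\<lambda>n. real n) at_top sequentially" by (rule filterlim_real_sequentially)
  have case1: "p \<longlonglongrightarrow> 0" if a: "\<alpha> > 1/2"
  proof -
    have "((\<lambda>n. real n powr (- (\<alpha> - 1/2))) \<longlongrightarrow> 0) sequentially"
      by (rule tendsto_neg_powr[OF _ nat_top]) (use a in simp)
    then have "filterlim (\<lambda>n. inverse (real n powr (- (\<alpha> - 1/2)))) at_top sequentially"
      by (rule filterlim_inverse_at_top)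
         (use eventually_ge_at_top[of "1::nat"] in \<open>eventually_elim, simp\<close>)
    moreover have "eventually (\<lambda>n. inverse (real n powr (- (\<alpha> - 1/2))) = real n powr (\<alpha> - 1/2)) sequentially"
      using eventually_ge_at_top[of "1::nat"] by eventually_elim (simp only: powr_minus[symmetric] minus_minus)
    ultimately have pw: "filterlim (\<lambda>n. real n powr (\<alpha> - 1/2)) at_top sequentially"
      by (rule filterlim_cong[THEN iffD1, OF refl refl, rotated])
    have pos: "0 < c * 1 * (1 / sqrt (2 * pi))" using c by simp
    have "filterlim (\<lambda>n. c * R n * Q n * real n powr (\<alpha> - 1/2)) at_top sequentially"
      by (rule filterlim_tendsto_pos_mult_at_top[OF RQ pos pw])
    then have "filterlim (\<lambda>n. - (c * R n * Q n * real n powr (\<alpha> - 1/2))) at_bot sequentially"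
      by (simp add: filterlim_uminus_at_top)
    then have "((\<lambda>n. exp (- (c * R n * Q n * real n powr (\<alpha> - 1/2)))) \<longlongrightarrow> 0) sequentially"
      by (rule filterlim_compose[OF exp_at_bot])
    then show ?thesis
      by (rule Lim_transform_eventually) (use texp in \<open>eventually_elim, simp\<close>)
  qed
  have case2: "p \<longlonglongrightarrow> exp (- sqrt (2 / pi) * \<rho> * \<delta>)" if a: "\<alpha> = 1/2"
  proof -
    have "((\<lambda>n. exp (- (c * R n * Q n * 1))) \<longlongrightarrow> exp (- (c * 1 * (1 / sqrt (2 * pi)) * 1))) sequentially"
      by (intro tendsto_intros RQ)
    moreover have "c * 1 * (1 / sqrt (2 * pi)) * 1 = sqrt (2 / pi) * \<rho> * \<delta>"
    proof -
      have s2: "sqrt 2 * sqrt 2 = (2::real)" by simp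
      have "2 / sqrt (2 * pi) = sqrt (2 / pi)"
        unfolding real_sqrt_divide real_sqrt_mult using s2 by (simp add: field_simps)
      then show ?thesis unfolding c_def by (simp add: field_simps)
    qed
    ultimately have L: "((\<lambda>n. exp (- (c * R n * Q n * 1))) \<longlongrightarrow> exp (- sqrt (2 / pi) * \<rho> * \<delta>)) sequentially"
      by simp
    show ?thesis
      by (rule Lim_transform_eventually[OF L]) (use texp eventually_ge_at_top[of "1::nat"] in \<open>eventually_elim, simp add: a\<close>)
  qed
  have case3: "p \<longlonglongrightarrow> 1" if a: "\<alpha> < 1/2"
  proof -
    have "((\<lambda>n. real n powr (\<alpha> - 1/2)) \<longlongrightarrow> 0) sequentially"
      by (rule tendsto_neg_powr[OF _ nat_top]) (use a in simp)
    then have "((\<lambda>n. exp (- (c * R n * Q n * real n powr (\<alpha> - 1/2)))) \<longlongrightarrow> exp (- (c * 1 * (1 / sqrt (2 * pi)) * 0))) sequentially"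
      by (intro tendsto_intros RQ)
    then have L: "((\<lambda>n. exp (- (c * R n * Q n * real n powr (\<alpha> - 1/2)))) \<longlongrightarrow> 1) sequentially"
      by simp
    show ?thesis
      by (rule Lim_transform_eventually[OF L]) (use texp in \<open>eventually_elim, simp\<close>)
  qed
  show ?thesis using case1 case2 case3 by blast
qed

theorem proposition3p4:
  fixes M :: "nat \<Rightarrow> 'w measure"
    and X :: "nat \<Rightarrow> 'w \<Rightarrow> ((nat \<Rightarrow> real) \<times> real) set"
    and Y :: "nat \<Rightarrow> 'w \<Rightarrow> (nat \<Rightarrow> real)"
    and \<gamma> :: "nat \<Rightarrow> real" and \<rho> \<alpha> \<delta> :: real
  assumes "\<delta> > 0" and "\<rho> > 0"
    and "\<forall>n\<ge>1. \<gamma> n > 0"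
    and "\<gamma> \<sim>[sequentially] (\<lambda>n. \<rho> * real n powr \<alpha>)"
    and "\<forall>n\<ge>1. poisson_process (M n) (X n) (hyp_intensity n (\<gamma> n))"
    and "\<forall>n\<ge>1. Y n \<in> measurable (M n) (lebesgue_n n)"
    and "\<forall>n\<ge>1. distr (M n) (lebesgue_n n) (Y n) = unif_sphere n \<delta>"
    and "\<forall>n\<ge>1. indep_of_process (M n) (X n) (hyp_intensity n (\<gamma> n)) (Y n) (lebesgue_n n)"
    and "\<forall>n\<ge>1. {\<omega> \<in> space (M n). Y n \<omega> \<in> zero_cell n (X n \<omega>)} \<in> sets (M n)"
  shows "(\<alpha> > 1/2 \<longrightarrow>
           (\<lambda>n. measure (M n) {\<omega> \<in> space (M n). Y n \<omega> \<in> zero_cell n (X n \<omega>)})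
             \<longlonglongrightarrow> 0)
       \<and> (\<alpha> = 1/2 \<longrightarrow>
           (\<lambda>n. measure (M n) {\<omega> \<in> space (M n). Y n \<omega> \<in> zero_cell n (X n \<omega>)})
             \<longlonglongrightarrow> exp (- sqrt (2 / pi) * \<rho> * \<delta>))
       \<and> (\<alpha> < 1/2 \<longrightarrow>
           (\<lambda>n. measure (M n) {\<omega> \<in> space (M n). Y n \<omega> \<in> zero_cell n (X n \<omega>)})
             \<longlonglongrightarrow> 1)"
proof (rule final_limits[OF assms(1,2,4)])
  fix n :: nat assume n: "n \<ge> 1"
  show "measure (M n) {\<omega> \<in> space (M n). Y n \<omega> \<in> zero_cell n (X n \<omega>)} = exp (- (2 * \<gamma> n * (\<delta> * Kc n)))"
    by (rule per_n_exact[OF n assms(1)]) (use assms(3,5-9) n in auto)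
qed

end
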